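(* Let $m>1$. Suppose that the $\mathbb{G}^{*m-1}$-optional splitting formula holds at times $\tau_1,\ldots,\tau_{m-1}$ with respect to $\mathbb{F}$, and that the optional splitting formula holds at the marked time $(\xi_m,\tau_m)$ with respect to $\mathbb{G}^{*m-1}$, i.e. for every $\mathbb{G}^{*m}$-optional process $Y$ there exist $Y'\in\mathcal{O}(\mathbb{G}^{*m-1})$ and a $\mathcal{D}\otimes\mathcal{O}(\mathbb{G}^{*m-1})$-measurable function $Y''$ on $\mathfrak{D}(E)\times(\mathbb{R}_+\times\Omega)$ with $Y=Y'\mathbf{1}_{[0,\tau_m)}+Y''(H_m)\mathbf{1}_{[\tau_m,\infty)}$. Then the $\mathbb{G}^{*m}$-optional splitting formula holds at times $\tau_1,\ldots,\tau_m$ with respect to $\mathbb{F}$.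
   Context: Let $(\Omega,\mathcal{A},\mathbb{Q})$ be a probability space with a right-continuous filtration $\mathbb{F}=(\mathcal{F}_t)_{t\ge0}$ such that $\mathcal{F}_0$ contains $\mathcal{N}^{\mathcal{F}_\infty}$, where for a $\sigma$-algebra $\mathcal{T}\subset\mathcal{A}$, $\mathcal{N}^{\mathcal{T}}$ denotes the $\sigma$-algebra generated by all subsets of $\mathcal{T}$-measurable $\mathbb{Q}$-null sets. Let $(E,\mathcal{E})$ be a separable complete metric space with its Borel $\sigma$-algebra, $\Delta\in E$, $E^\circ=E\setminus\{\Delta\}$. Let $\tau_1,\ldots,\tau_m$ be $[0,\infty]$-valued random variables and $\xi_1,\ldots,\xi_m$ be $E^\circ$-valued random variables. Define $H_i(t)=\Delta$ if $t<\tau_i$ and $H_i(t)=\xi_i$ if $\tau_i\le t$ ($t\ge0$). For $1\le k\le m$, $\mathcal{H}^{k}_t=\sigma(H_i(s):1\le i\le k,0\le s\le t)$, $\mathcal{N}^{*k}=\mathcal{N}^{\mathcal{H}^k_\infty\vee\mathcal{F}_\infty}$, and $\mathcal{G}^{*k}_t=\mathcal{N}^{*k}\vee\bigcap_{s>t}(\mathcal{F}_s\vee\mathcal{H}^k_s)$, defining the filtration $\mathbb{G}^{*k}$. $\mathfrak{D}(E)$ is the space of càdlàg $E$-valued functions on $\mathbb{R}_+$ with the Skorokhod topology and Borel $\sigma$-algebra $\mathcal{D}$. $\sigma_{k,1}\le\cdots\le\sigma_{k,k}$ denotes the increasing reordering of $\tau_1,\ldots,\tau_k$, with $\sigma_{k,0}=0$,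 $\sigma_{k,k+1}=\infty$; $H_i^{R}$ denotes $H_i$ stopped at $R$. For a function $Z$ on $F\times(\mathbb{R}_+\times\Omega)$ and a random element $\Upsilon$ of $F$, $Z(\Upsilon)(t,\omega)=Z(\Upsilon(\omega),t,\omega)$. The $\mathbb{G}^{*k}$-optional splitting formula holds at times $\tau_1,\ldots,\tau_k$ with respect to $\mathbb{F}$ if for every $\mathbb{G}^{*k}$-optional $Y$ there exist $\mathcal{D}^{k}\otimes\mathcal{O}(\mathbb{F})$-measurable functions $Y^{(0)},\ldots,Y^{(k)}$ on $\mathfrak{D}(E)^k\times(\mathbb{R}_+\times\Omega)$ with $Y=\sum_{i=0}^kY^{(i)}(H_1^{\sigma_{k,i}},\ldots,H_k^{\sigma_{k,i}})\mathbf{1}_{[\sigma_{k,i},\sigma_{k,i+1})}$ up to indistinguishability outside a null set of $\mathcal{N}^{*k}$. *)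

theory Defs
  imports "HOL-Probability.Probability"
begin

definition cadlag_Rplus :: "(real \<Rightarrow> 'b::topological_space) \<Rightarrow> bool" where
  "cadlag_Rplus f \<longleftrightarrow> (\<forall>t\<ge>0. continuous (at_right t) f) \<and> (\<forall>t>0. \<exists>l. (f \<longlongrightarrow> l) (at_left t))"

section \<open>Skorokhod space D(E) with the Skorokhod (J1) metric of Ethier-Kurtz (3.5.2)\<close>

definition skor_Lambda :: "(real \<Rightarrow> real) set" where
  "skor_Lambda = {l. strict_mono_on {0..} l \<and> l ` {0..} = {0..} \<and> (\<exists>C. C-lipschitz_on {0..} l)
      \<and> bdd_above {\<bar>ln ((l s - l t) / (s - t))\<bar> | s t. 0 \<le> t \<and> t < s}}"

definition skor_gamma :: "(real \<Rightarrow> real) \<Rightarrow> real" where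
  "skor_gamma l = Sup {\<bar>ln ((l s - l t) / (s - t))\<bar> | s t. 0 \<le> t \<and> t < s}"

definition skor_du :: "(real \<Rightarrow> 'e::metric_space) \<Rightarrow> (real \<Rightarrow> 'e) \<Rightarrow> (real \<Rightarrow> real) \<Rightarrow> real \<Rightarrow> real" where
  "skor_du x y l u = Sup {min (dist (x (min t u)) (y (min (l t) u))) 1 | t. 0 \<le> t}"

definition skor_dist :: "(real \<Rightarrow> 'e::metric_space) \<Rightarrow> (real \<Rightarrow> 'e) \<Rightarrow> real" where
  "skor_dist x y = Inf {max (skor_gamma l)
      (enn2real (\<integral>\<^sup>+ u. ennreal (exp (- u) * skor_du x y l u) * indicator {0..} u \<partial>lborel)) | l. l \<in> skor_Lambda}"

text \<open>Cadlag E-valued paths on R_+; we extend them to negative times by the constant Delta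
  (the processes H_i below take the value Delta before time 0 anyway).\<close>
definition Dspace :: "'e::metric_space \<Rightarrow> (real \<Rightarrow> 'e) set" where
  "Dspace \<Delta> = {x. cadlag_Rplus x \<and> (\<forall>t<0. x t = \<Delta>)}"

definition Dmeas :: "'e::metric_space \<Rightarrow> (real \<Rightarrow> 'e) measure" where
  "Dmeas \<Delta> = sigma (Dspace \<Delta>)
     {U. U \<subseteq> Dspace \<Delta> \<and> (\<forall>x\<in>U. \<exists>e>0. \<forall>y\<in>Dspace \<Delta>. skor_dist x y < e \<longrightarrow> y \<in> U)}"

definition nullsig :: "'a measure \<Rightarrow> 'a set set \<Rightarrow> 'a set set" where
  "nullsig Q T = sigma_sets (space Q) {N. N \<subseteq> space Q \<and> (\<exists>B\<in>T. B \<in> sets Q \<and> emeasure Q B = 0 \<and> N \<subseteq> B)}"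

definition Finf :: "'a set \<Rightarrow> (real \<Rightarrow> 'a set set) \<Rightarrow> 'a set set" where
  "Finf \<Omega> F = sigma_sets \<Omega> (\<Union>t\<in>{0..}. F t)"

definition Hproc :: "'e \<Rightarrow> (nat \<Rightarrow> 'a \<Rightarrow> ereal) \<Rightarrow> (nat \<Rightarrow> 'a \<Rightarrow> 'e) \<Rightarrow> nat \<Rightarrow> 'a \<Rightarrow> real \<Rightarrow> 'e" where
  "Hproc \<Delta> \<tau> \<xi> i \<omega> t = (if ereal t < \<tau> i \<omega> then \<Delta> else \<xi> i \<omega>)"

definition Hsig :: "'a set \<Rightarrow> 'e::topological_space \<Rightarrow> (nat \<Rightarrow> 'a \<Rightarrow> ereal) \<Rightarrow> (nat \<Rightarrow> 'a \<Rightarrow> 'e)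
    \<Rightarrow> nat \<Rightarrow> ereal \<Rightarrow> 'a set set" where
  "Hsig \<Omega> \<Delta> \<tau> \<xi> k t = sigma_sets \<Omega>
     {{\<omega>\<in>\<Omega>. Hproc \<Delta> \<tau> \<xi> i \<omega> s \<in> B} | i s B. 1 \<le> i \<and> i \<le> k \<and> 0 \<le> s \<and> ereal s \<le> t \<and> B \<in> sets borel}"

definition Nstar :: "'a measure \<Rightarrow> (real \<Rightarrow> 'a set set) \<Rightarrow> 'e::topological_space \<Rightarrow> (nat \<Rightarrow> 'a \<Rightarrow> ereal)
    \<Rightarrow> (nat \<Rightarrow> 'a \<Rightarrow> 'e) \<Rightarrow> nat \<Rightarrow> 'a set set" where
  "Nstar Q F \<Delta> \<tau> \<xi> k = nullsig Q (sigma_sets (space Q) (Hsig (space Q) \<Delta> \<tau> \<xi> k \<infinity> \<union> Finf (space Q) F))"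

definition Gstar :: "'a measure \<Rightarrow> (real \<Rightarrow> 'a set set) \<Rightarrow> 'e::topological_space \<Rightarrow> (nat \<Rightarrow> 'a \<Rightarrow> ereal)
    \<Rightarrow> (nat \<Rightarrow> 'a \<Rightarrow> 'e) \<Rightarrow> nat \<Rightarrow> real \<Rightarrow> 'a set set" where
  "Gstar Q F \<Delta> \<tau> \<xi> k t = sigma_sets (space Q)
     (Nstar Q F \<Delta> \<tau> \<xi> k \<union> (\<Inter>s\<in>{t<..}. sigma_sets (space Q) (F s \<union> Hsig (space Q) \<Delta> \<tau> \<xi> k (ereal s))))"

definition cadlag_adapted :: "'a set \<Rightarrow> (real \<Rightarrow> 'a set set) \<Rightarrow> (real \<times> 'a \<Rightarrow> real) \<Rightarrow> bool" where
  "cadlag_adapted \<Omega> G X \<longleftrightarrow> (\<forall>\<omega>\<in>\<Omega>. cadlag_Rplus (\<lambda>t. X (t, \<omega>)))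
     \<and> (\<forall>t\<ge>0. \<forall>B\<in>sets borel. {\<omega>\<in>\<Omega>. X (t, \<omega>) \<in> B} \<in> G t)"

definition Opt :: "'a set \<Rightarrow> (real \<Rightarrow> 'a set set) \<Rightarrow> (real \<times> 'a) measure" where
  "Opt \<Omega> G = sigma ({0..} \<times> \<Omega>)
     {{p \<in> {0..} \<times> \<Omega>. X p \<in> B} | X B. cadlag_adapted \<Omega> G X \<and> B \<in> sets borel}"

definition sig_ord :: "(nat \<Rightarrow> 'a \<Rightarrow> ereal) \<Rightarrow> nat \<Rightarrow> nat \<Rightarrow> 'a \<Rightarrow> ereal" where
  "sig_ord \<tau> k i \<omega> = (if i = 0 then 0
      else if i \<le> k then sort (map (\<lambda>j. \<tau> j \<omega>) [1..<Suc k]) ! (i - 1) else \<infinity>)"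

definition Hstop :: "'e \<Rightarrow> (nat \<Rightarrow> 'a \<Rightarrow> ereal) \<Rightarrow> (nat \<Rightarrow> 'a \<Rightarrow> 'e) \<Rightarrow> nat \<Rightarrow> ereal \<Rightarrow> 'a \<Rightarrow> real \<Rightarrow> 'e" where
  "Hstop \<Delta> \<tau> \<xi> i R \<omega> t = (if ereal t \<le> R then Hproc \<Delta> \<tau> \<xi> i \<omega> t else Hproc \<Delta> \<tau> \<xi> i \<omega> (real_of_ereal R))"

definition opt_split :: "'a measure \<Rightarrow> (real \<Rightarrow> 'a set set) \<Rightarrow> 'e::metric_space \<Rightarrow> (nat \<Rightarrow> 'a \<Rightarrow> ereal)
    \<Rightarrow> (nat \<Rightarrow> 'a \<Rightarrow> 'e) \<Rightarrow> nat \<Rightarrow> bool" where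
  "opt_split Q F \<Delta> \<tau> \<xi> k \<longleftrightarrow>
    (\<forall>Y :: real \<times> 'a \<Rightarrow> real. Y \<in> borel_measurable (Opt (space Q) (Gstar Q F \<Delta> \<tau> \<xi> k)) \<longrightarrow>
       (\<exists>Ys :: nat \<Rightarrow> (nat \<Rightarrow> real \<Rightarrow> 'e) \<times> (real \<times> 'a) \<Rightarrow> real.
         (\<forall>i\<le>k. Ys i \<in> borel_measurable (PiM {1..k} (\<lambda>_. Dmeas \<Delta>) \<Otimes>\<^sub>M Opt (space Q) F)) \<and>
         (\<exists>N \<in> Nstar Q F \<Delta> \<tau> \<xi> k.
            (\<exists>B \<in> sigma_sets (space Q) (Hsig (space Q) \<Delta> \<tau> \<xi> k \<infinity> \<union> Finf (space Q) F).
                B \<in> sets Q \<and> emeasure Q B = 0 \<and> N \<subseteq> B) \<and>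
            (\<forall>\<omega> \<in> space Q - N. \<forall>t\<ge>0.
               Y (t, \<omega>) = (\<Sum>i\<le>k. Ys i (restrict (\<lambda>j. Hstop \<Delta> \<tau> \<xi> j (sig_ord \<tau> k i \<omega>) \<omega>) {1..k}, (t, \<omega>))
                   * (if sig_ord \<tau> k i \<omega> \<le> ereal t \<and> ereal t < sig_ord \<tau> k (Suc i) \<omega> then 1 else 0))))))"

definition opt_split_marked :: "'a measure \<Rightarrow> (real \<Rightarrow> 'a set set) \<Rightarrow> 'e::metric_space \<Rightarrow> (nat \<Rightarrow> 'a \<Rightarrow> ereal)
    \<Rightarrow> (nat \<Rightarrow> 'a \<Rightarrow> 'e) \<Rightarrow> nat \<Rightarrow> bool" where
  "opt_split_marked Q F \<Delta> \<tau> \<xi> m \<longleftrightarrow>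
    (\<forall>Y :: real \<times> 'a \<Rightarrow> real. Y \<in> borel_measurable (Opt (space Q) (Gstar Q F \<Delta> \<tau> \<xi> m)) \<longrightarrow>
       (\<exists>Y' \<in> borel_measurable (Opt (space Q) (Gstar Q F \<Delta> \<tau> \<xi> (m - 1))).
       \<exists>Y'' \<in> borel_measurable (Dmeas \<Delta> \<Otimes>\<^sub>M Opt (space Q) (Gstar Q F \<Delta> \<tau> \<xi> (m - 1))).
         \<forall>\<omega>\<in>space Q. \<forall>t\<ge>0.
           Y (t, \<omega>) = Y' (t, \<omega>) * (if ereal t < \<tau> m \<omega> then 1 else 0)
                      + Y'' (Hproc \<Delta> \<tau> \<xi> m \<omega>, (t, \<omega>)) * (if \<tau> m \<omega> \<le> ereal t then 1 else 0)))"

end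

theory Submission
  imports Defs
begin

definition act :: "(nat \<Rightarrow> 'a \<Rightarrow> ereal) \<Rightarrow> nat \<Rightarrow> nat \<Rightarrow> 'a \<Rightarrow> real \<Rightarrow> bool" where
  "act \<tau> k i \<omega> t \<longleftrightarrow> sig_ord \<tau> k i \<omega> \<le> ereal t \<and> ereal t < sig_ord \<tau> k (Suc i) \<omega>"

definition cnt :: "(nat \<Rightarrow> 'a \<Rightarrow> ereal) \<Rightarrow> nat \<Rightarrow> 'a \<Rightarrow> real \<Rightarrow> nat" where
  "cnt \<tau> k \<omega> t = length (filter (\<lambda>x. x \<le> ereal t) (map (\<lambda>j. \<tau> j \<omega>) [1..<Suc k]))"

lemma sig_ord_nth: "1 \<le> i \<Longrightarrow> i \<le> k \<Longrightarrow>
  sig_ord \<tau> k i \<omega> = sort (map (\<lambda>j. \<tau> j \<omega>) [1..<Suc k]) ! (i - 1)"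
  by (simp add: sig_ord_def)

lemma sig_ord_mono:
  assumes nn: "\<forall>l\<in>{1..k}. 0 \<le> \<tau> l \<omega>" and "i \<le> i'"
  shows "sig_ord \<tau> k i \<omega> \<le> sig_ord \<tau> k i' \<omega>"
proof -
  let ?L = "sort (map (\<lambda>j. \<tau> j \<omega>) [1..<Suc k])"
  have len: "length ?L = k" by simp
  have srt: "sorted ?L" by simp
  have inset: "\<And>p. p < k \<Longrightarrow> 0 \<le> ?L ! p"
  proof -
    fix p assume "p < k"
    then have "?L ! p \<in> set ?L" using len by (metis nth_mem)
    then show "0 \<le> ?L ! p" using nn by auto
  qed
  show ?thesis
  proof (cases "i' = 0")
    case True then show ?thesis using assms by simp
  next
    case False
    show ?thesis
    proof (cases "i' \<le> k")
      case False then show ?thesis by (simp add: sig_ord_def)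
    next
      case True
      show ?thesis
      proof (cases "i = 0")
        case True then show ?thesis using inset \<open>i' \<noteq> 0\<close> \<open>i' \<le> k\<close> by (simp add: sig_ord_def)
      next
        case False
        then show ?thesis using \<open>i' \<le> k\<close> \<open>i' \<noteq> 0\<close> assms(2) srt len
          by (simp add: sig_ord_def sorted_nth_mono)
      qed
    qed
  qed
qed

lemma sig_ord_nonneg:
  assumes nn: "\<forall>l\<in>{1..k}. 0 \<le> \<tau> l \<omega>"
  shows "0 \<le> sig_ord \<tau> k i \<omega>"
  using sig_ord_mono[where i=0 and i'=i and \<tau>=\<tau> and k=k and \<omega>=\<omega>] nn by (simp add: sig_ord_def)

lemma act_le:
  assumes nn: "\<forall>l\<in>{1..k}. 0 \<le> \<tau> l \<omega>" and a: "act \<tau> k i \<omega> t" and ik: "i \<le> k" and l: "l \<in> {1..k}"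
  shows "\<tau> l \<omega> \<le> sig_ord \<tau> k i \<omega> \<longleftrightarrow> \<tau> l \<omega> \<le> ereal t"
proof
  assume "\<tau> l \<omega> \<le> sig_ord \<tau> k i \<omega>" then show "\<tau> l \<omega> \<le> ereal t" using a unfolding act_def by auto
next
  assume lt: "\<tau> l \<omega> \<le> ereal t"
  let ?L = "sort (map (\<lambda>j. \<tau> j \<omega>) [1..<Suc k])"
  have len: "length ?L = k" by simp
  have "\<tau> l \<omega> \<in> set ?L" using l by (auto simp del: upt_Suc)
  then obtain p where p: "p < k" "?L ! p = \<tau> l \<omega>" using len by (metis in_set_conv_nth)
  show "\<tau> l \<omega> \<le> sig_ord \<tau> k i \<omega>"
  proof (cases "p + 1 \<le> i")
    case True
    then have "?L ! p \<le> ?L ! (i - 1)" using ik len by (intro sorted_nth_mono) auto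
    then show ?thesis using True ik p by (simp add: sig_ord_def)
  next
    case False
    then have "?L ! i \<le> ?L ! p" using p len by (intro sorted_nth_mono) auto
    moreover have "sig_ord \<tau> k (Suc i) \<omega> = ?L ! i" using False p by (simp add: sig_ord_def)
    ultimately have "sig_ord \<tau> k (Suc i) \<omega> \<le> ereal t" using p lt by simp
    then show ?thesis using a leD unfolding act_def by blast
  qed
qed

lemma length_filter_sorted:
  fixes L :: "ereal list"
  assumes "sorted L" "j \<le> length L" "\<And>p. p < j \<Longrightarrow> P (L ! p)" "\<And>p. j \<le> p \<Longrightarrow> p < length L \<Longrightarrow> \<not> P (L ! p)"
  shows "length (filter P L) = j"
proof -
  have L: "L = take j L @ drop j L" by simp
  have 1: "filter P (take j L) = take j L"
    using assms(3) by (auto simp: filter_id_conv in_set_conv_nth)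
  have 2: "filter P (drop j L) = []"
    using assms(4) assms(2) by (auto simp: filter_empty_conv in_set_conv_nth)
  have "length (filter P L) = length (filter P (take j L)) + length (filter P (drop j L))"
    by (metis append_take_drop_id filter_append length_append)
  then show ?thesis using 1 2 assms(2) by simp
qed

lemma length_filter_sort: "length (filter P (sort xs)) = length (filter P xs)"
proof -
  have "length (filter P (sort xs)) = size (mset (filter P (sort xs)))" by (simp only: size_mset)
  also have "\<dots> = size (filter_mset P (mset (sort xs)))" by (simp only: mset_filter)
  also have "\<dots> = size (filter_mset P (mset xs))" by (simp only: mset_sort)
  also have "\<dots> = size (mset (filter P xs))" by (simp only: mset_filter)
  also have "\<dots> = length (filter P xs)" by (simp only: size_mset)
  finally show ?thesis .
qed

lemma act_cnt:
  assumes nn: "\<forall>l\<in>{1..k}. 0 \<le> \<tau> l \<omega>" and a: "act \<tau> k i \<omega> t" and ik: "i \<le> k"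
  shows "i = cnt \<tau> k \<omega> t"
proof -
  let ?L = "sort (map (\<lambda>j. \<tau> j \<omega>) [1..<Suc k])"
  have len: "length ?L = k" by simp
  have "length (filter (\<lambda>x. x \<le> ereal t) ?L) = i"
  proof (rule length_filter_sorted)
    show "sorted ?L" by simp
    show "i \<le> length ?L" using ik by simp
  next
    fix p assume "p < i"
    then have "?L ! p \<le> ?L ! (i - 1)" using ik len by (intro sorted_nth_mono) auto
    moreover have "sig_ord \<tau> k i \<omega> = ?L ! (i - 1)" using \<open>p < i\<close> ik by (simp add: sig_ord_def del: upt_Suc)
    ultimately show "?L ! p \<le> ereal t" using a unfolding act_def by (metis order.trans)
  next
    fix p assume "i \<le> p" "p < length ?L"
    then have "?L ! i \<le> ?L ! p" using len by (intro sorted_nth_mono) auto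
    moreover have "sig_ord \<tau> k (Suc i) \<omega> = ?L ! i" using \<open>i \<le> p\<close> \<open>p < length ?L\<close> len by (simp add: sig_ord_def del: upt_Suc)
    ultimately show "\<not> ?L ! p \<le> ereal t" using a unfolding act_def by (auto simp del: upt_Suc)
  qed
  then show ?thesis unfolding cnt_def by (simp add: length_filter_sort)
qed

lemma act_ex:
  assumes nn: "\<forall>l\<in>{1..k}. 0 \<le> \<tau> l \<omega>" and t: "0 \<le> t"
  shows "\<exists>i\<le>k. act \<tau> k i \<omega> t"
proof -
  define I where "I = {i. i \<le> k \<and> sig_ord \<tau> k i \<omega> \<le> ereal t}"
  have "0 \<in> I" using t by (simp add: I_def sig_ord_def)
  have fin: "finite I" by (simp add: I_def)
  define i where "i = Max I"
  have iI: "i \<in> I" using fin \<open>0 \<in> I\<close> unfolding i_def by (intro Max_in) auto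
  have "ereal t < sig_ord \<tau> k (Suc i) \<omega>"
  proof (cases "Suc i \<le> k")
    case True
    have "Suc i \<notin> I" using Max_ge[OF fin, of "Suc i"] unfolding i_def[symmetric] by auto
    then show ?thesis using True by (auto simp: I_def)
  next
    case False then show ?thesis by (simp add: sig_ord_def)
  qed
  then show ?thesis using iI unfolding I_def act_def by auto
qed

lemma act_unique:
  assumes nn: "\<forall>l\<in>{1..k}. 0 \<le> \<tau> l \<omega>" and "act \<tau> k i \<omega> t" "i \<le> k" "act \<tau> k j \<omega> t" "j \<le> k"
  shows "i = j"
  using act_cnt[OF nn assms(2,3)] act_cnt[OF nn assms(4,5)] by simp

lemma cnt_Suc: "cnt \<tau> (Suc k) \<omega> t = cnt \<tau> k \<omega> t + (if \<tau> (Suc k) \<omega> \<le> ereal t then 1 else 0)"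
  by (simp add: cnt_def)

lemma sum_act:
  fixes f :: "nat \<Rightarrow> real"
  assumes nn: "\<forall>l\<in>{1..k}. 0 \<le> \<tau> l \<omega>" and a: "act \<tau> k i \<omega> t" "i \<le> k"
  shows "(\<Sum>j\<le>k. f j * (if sig_ord \<tau> k j \<omega> \<le> ereal t \<and> ereal t < sig_ord \<tau> k (Suc j) \<omega> then 1 else 0)) = f i"
proof -
  have "(\<Sum>j\<le>k. f j * (if sig_ord \<tau> k j \<omega> \<le> ereal t \<and> ereal t < sig_ord \<tau> k (Suc j) \<omega> then 1 else 0))
      = (\<Sum>j\<le>k. if j = i then f j else 0)"
  proof (rule sum.cong)
    fix j assume "j \<in> {..k}"
    then show "f j * (if sig_ord \<tau> k j \<omega> \<le> ereal t \<and> ereal t < sig_ord \<tau> k (Suc j) \<omega> then 1 else 0) = (if j = i then f j else 0)"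
    proof (cases "act \<tau> k j \<omega> t")
      case True
      have "j \<le> k" using \<open>j \<in> {..k}\<close> by simp
      then have "j = i" using act_unique[OF nn True _ a(1) a(2)] by simp
      then show ?thesis using True unfolding act_def by simp
    next
      case False
      then have "j \<noteq> i" using a(1) by auto
      have c: "(sig_ord \<tau> k j \<omega> \<le> ereal t \<and> ereal t < sig_ord \<tau> k (Suc j) \<omega>) = False"
        using False unfolding act_def by simp
      show ?thesis using \<open>j \<noteq> i\<close> by (simp add: c)
    qed
  qed simp
  also have "\<dots> = f i" using a(2) by simp
  finally show ?thesis .
qed

lemma Hstop_eq:
  assumes "R \<noteq> -\<infinity>"
  shows "Hstop \<Delta> \<tau> \<xi> l R \<omega> = (\<lambda>s. if \<tau> l \<omega> \<le> R \<and> \<tau> l \<omega> \<le> ereal s then \<xi> l \<omega> else \<Delta>)"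
proof
  fix s
  show "Hstop \<Delta> \<tau> \<xi> l R \<omega> s = (if \<tau> l \<omega> \<le> R \<and> \<tau> l \<omega> \<le> ereal s then \<xi> l \<omega> else \<Delta>)"
  proof (cases R)
    case (real r)
    show ?thesis
    proof (cases "s \<le> r")
      case True
      have "\<tau> l \<omega> \<le> ereal s \<Longrightarrow> \<tau> l \<omega> \<le> ereal r" using True by (meson ereal_less_eq(3) order_trans)
      then show ?thesis using True real unfolding Hstop_def Hproc_def by (auto simp: not_less)
    next
      case False
      have "\<tau> l \<omega> \<le> ereal r \<Longrightarrow> \<tau> l \<omega> \<le> ereal s" using False by (meson ereal_less_eq(3) order_trans linorder_le_cases)
      then show ?thesis using False real unfolding Hstop_def Hproc_def by (auto simp: not_less)
    qed
  qed (use assms in \<open>auto simp: Hstop_def Hproc_def not_less\<close>)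
qed

lemma Hproc_eq: "Hproc \<Delta> \<tau> \<xi> l \<omega> = (\<lambda>s. if \<tau> l \<omega> \<le> ereal s then \<xi> l \<omega> else \<Delta>)"
  by (auto simp: Hproc_def not_less fun_eq_iff)



definition goodN :: "'a measure \<Rightarrow> (real \<Rightarrow> 'a set set) \<Rightarrow> 'e::topological_space \<Rightarrow> (nat \<Rightarrow> 'a \<Rightarrow> ereal)
    \<Rightarrow> (nat \<Rightarrow> 'a \<Rightarrow> 'e) \<Rightarrow> nat \<Rightarrow> 'a set \<Rightarrow> bool" where
  "goodN Q F \<Delta> \<tau> \<xi> k N \<longleftrightarrow> N \<in> Nstar Q F \<Delta> \<tau> \<xi> k \<and>
     (\<exists>B \<in> sigma_sets (space Q) (Hsig (space Q) \<Delta> \<tau> \<xi> k \<infinity> \<union> Finf (space Q) F).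
                B \<in> sets Q \<and> emeasure Q B = 0 \<and> N \<subseteq> B)"

definition hpath :: "'e \<Rightarrow> (nat \<Rightarrow> 'a \<Rightarrow> ereal) \<Rightarrow> (nat \<Rightarrow> 'a \<Rightarrow> 'e) \<Rightarrow> nat \<Rightarrow> ereal \<Rightarrow> 'a \<Rightarrow> nat \<Rightarrow> real \<Rightarrow> 'e" where
  "hpath \<Delta> \<tau> \<xi> k R \<omega> = restrict (\<lambda>j. Hstop \<Delta> \<tau> \<xi> j R \<omega>) {1..k}"

lemma choice2:
  assumes "\<forall>n::nat. \<exists>\<Phi>. A n \<Phi> \<and> (\<exists>N. B n N \<and> C n \<Phi> N)"
  shows "\<exists>\<Phi> N. (\<forall>n. A n (\<Phi> n)) \<and> (\<forall>n. B n (N n)) \<and> (\<forall>n. C n (\<Phi> n) (N n))"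
proof -
  from choice[OF assms] obtain \<Phi> where \<Phi>: "\<forall>n. A n (\<Phi> n) \<and> (\<exists>N. B n N \<and> C n (\<Phi> n) N)" by blast
  then have "\<forall>n. \<exists>N. B n N \<and> C n (\<Phi> n) N" by blast
  from choice[OF this] obtain N where "\<forall>n. B n (N n) \<and> C n (\<Phi> n) (N n)" by blast
  then show ?thesis using \<Phi> by blast
qed

lemma goodN_empty: "goodN Q F \<Delta> \<tau> \<xi> k {}"
  unfolding goodN_def Nstar_def nullsig_def
  by (auto intro!: bexI[of _ "{}"] sigma_sets.Empty)

lemma goodN_Un: "goodN Q F \<Delta> \<tau> \<xi> k N1 \<Longrightarrow> goodN Q F \<Delta> \<tau> \<xi> k N2 \<Longrightarrow> goodN Q F \<Delta> \<tau> \<xi> k (N1 \<union> N2)"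
  unfolding goodN_def Nstar_def nullsig_def
  apply (elim conjE bexE)
  subgoal for B1 B2
    apply (intro conjI bexI[of _ "B1 \<union> B2"])
    apply (auto intro: sigma_sets_Un)
    apply (metis emeasure_Un_null_set null_setsI)
    done
  done

lemma goodN_UN: "\<forall>n::nat. goodN Q F \<Delta> \<tau> \<xi> k (N n) \<Longrightarrow> goodN Q F \<Delta> \<tau> \<xi> k (\<Union>n. N n)"
proof -
  assume a0: "\<forall>n::nat. goodN Q F \<Delta> \<tau> \<xi> k (N n)"
  then have a: "\<And>n::nat. goodN Q F \<Delta> \<tau> \<xi> k (N n)" by blast
  let ?S = "sigma_sets (space Q) (Hsig (space Q) \<Delta> \<tau> \<xi> k \<infinity> \<union> Finf (space Q) F)"
  have "\<forall>n. \<exists>B \<in> ?S. B \<in> sets Q \<and> emeasure Q B = 0 \<and> N n \<subseteq> B" using a unfolding goodN_def by blast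
  then obtain B where B: "\<And>n. B n \<in> ?S" "\<And>n. B n \<in> sets Q" "\<And>n. emeasure Q (B n) = 0" "\<And>n. N n \<subseteq> B n"
    by metis
  have "(\<Union>n. N n) \<in> Nstar Q F \<Delta> \<tau> \<xi> k" using a unfolding goodN_def Nstar_def nullsig_def
    by (intro sigma_sets.Union) auto
  moreover have "(\<Union>n. B n) \<in> ?S" using B by (intro sigma_sets.Union) auto
  moreover have "emeasure Q (\<Union>n. B n) = 0" using B by (intro emeasure_UN_eq_0) auto
  moreover have "(\<Union>n. N n) \<subseteq> (\<Union>n. B n)" using B(4) by blast
  ultimately show ?thesis unfolding goodN_def using B by (intro conjI bexI[of _ "\<Union>n. B n"]) auto
qed

lemma Hsig_mono: "k \<le> k' \<Longrightarrow> Hsig \<Omega> \<Delta> \<tau> \<xi> k t \<subseteq> Hsig \<Omega> \<Delta> \<tau> \<xi> k' t"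
  unfolding Hsig_def by (rule sigma_sets_mono') fastforce

lemma goodN_mono: "goodN Q F \<Delta> \<tau> \<xi> k N \<Longrightarrow> k \<le> k' \<Longrightarrow> goodN Q F \<Delta> \<tau> \<xi> k' N"
proof -
  assume g: "goodN Q F \<Delta> \<tau> \<xi> k N" and kk: "k \<le> k'"
  have sub: "sigma_sets (space Q) (Hsig (space Q) \<Delta> \<tau> \<xi> k \<infinity> \<union> Finf (space Q) F)
    \<subseteq> sigma_sets (space Q) (Hsig (space Q) \<Delta> \<tau> \<xi> k' \<infinity> \<union> Finf (space Q) F)"
    using Hsig_mono[OF kk] by (intro sigma_sets_mono') blast
  have "Nstar Q F \<Delta> \<tau> \<xi> k \<subseteq> Nstar Q F \<Delta> \<tau> \<xi> k'"
    unfolding Nstar_def nullsig_def by (rule sigma_sets_mono') (use sub in blast)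
  then show ?thesis using g sub unfolding goodN_def by blast
qed

lemma space_Dmeas[simp]: "space (Dmeas \<Delta>) = Dspace \<Delta>"
  unfolding Dmeas_def by (rule space_measure_of_conv)

lemma space_Opt[simp]: "space (Opt \<Omega> G) = {0..} \<times> \<Omega>"
  unfolding Opt_def by (rule space_measure_of_conv)

lemma os_act:
  fixes Q :: "'a measure" and \<Delta> :: "'e::metric_space" and Y :: "real \<times> 'a \<Rightarrow> real"
  assumes os: "opt_split Q F \<Delta> \<tau> \<xi> k"
    and nn: "\<forall>\<omega>\<in>space Q. \<forall>l\<in>{1..k}. 0 \<le> \<tau> l \<omega>"
    and Y: "Y \<in> borel_measurable (Opt (space Q) (Gstar Q F \<Delta> \<tau> \<xi> k))"
  shows "\<exists>Ys. (\<forall>i\<le>k. Ys i \<in> borel_measurable (PiM {1..k} (\<lambda>_. Dmeas \<Delta>) \<Otimes>\<^sub>M Opt (space Q) F)) \<and>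
     (\<exists>N. goodN Q F \<Delta> \<tau> \<xi> k N \<and> (\<forall>\<omega>\<in>space Q - N. \<forall>t\<ge>0. \<forall>i\<le>k. act \<tau> k i \<omega> t \<longrightarrow>
        Y (t, \<omega>) = Ys i (hpath \<Delta> \<tau> \<xi> k (sig_ord \<tau> k i \<omega>) \<omega>, (t, \<omega>))))"
proof -
  have "\<exists>Ys :: nat \<Rightarrow> (nat \<Rightarrow> real \<Rightarrow> 'e) \<times> (real \<times> 'a) \<Rightarrow> real.
         (\<forall>i\<le>k. Ys i \<in> borel_measurable (PiM {1..k} (\<lambda>_. Dmeas \<Delta>) \<Otimes>\<^sub>M Opt (space Q) F)) \<and>
         (\<exists>N \<in> Nstar Q F \<Delta> \<tau> \<xi> k.
            (\<exists>B \<in> sigma_sets (space Q) (Hsig (space Q) \<Delta> \<tau> \<xi> k \<infinity> \<union> Finf (space Q) F).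
                B \<in> sets Q \<and> emeasure Q B = 0 \<and> N \<subseteq> B) \<and>
            (\<forall>\<omega> \<in> space Q - N. \<forall>t\<ge>0.
               Y (t, \<omega>) = (\<Sum>i\<le>k. Ys i (restrict (\<lambda>j. Hstop \<Delta> \<tau> \<xi> j (sig_ord \<tau> k i \<omega>) \<omega>) {1..k}, (t, \<omega>))
                   * (if sig_ord \<tau> k i \<omega> \<le> ereal t \<and> ereal t < sig_ord \<tau> k (Suc i) \<omega> then 1 else 0))))"
    by (rule mp[OF spec[OF os[unfolded opt_split_def], of Y] Y])
  then obtain Ys where m: "\<forall>i\<le>k. Ys i \<in> borel_measurable (PiM {1..k} (\<lambda>_. Dmeas \<Delta>) \<Otimes>\<^sub>M Opt (space Q) F)"
    and r: "\<exists>N \<in> Nstar Q F \<Delta> \<tau> \<xi> k.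
            (\<exists>B \<in> sigma_sets (space Q) (Hsig (space Q) \<Delta> \<tau> \<xi> k \<infinity> \<union> Finf (space Q) F).
                B \<in> sets Q \<and> emeasure Q B = 0 \<and> N \<subseteq> B) \<and>
            (\<forall>\<omega> \<in> space Q - N. \<forall>t\<ge>0.
               Y (t, \<omega>) = (\<Sum>i\<le>k. Ys i (restrict (\<lambda>j. Hstop \<Delta> \<tau> \<xi> j (sig_ord \<tau> k i \<omega>) \<omega>) {1..k}, (t, \<omega>))
                   * (if sig_ord \<tau> k i \<omega> \<le> ereal t \<and> ereal t < sig_ord \<tau> k (Suc i) \<omega> then 1 else 0)))"
    by (elim exE conjE)
  from r obtain N where N1: "N \<in> Nstar Q F \<Delta> \<tau> \<xi> k"
    and NR: "(\<exists>B \<in> sigma_sets (space Q) (Hsig (space Q) \<Delta> \<tau> \<xi> k \<infinity> \<union> Finf (space Q) F).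
                B \<in> sets Q \<and> emeasure Q B = 0 \<and> N \<subseteq> B) \<and>
            (\<forall>\<omega> \<in> space Q - N. \<forall>t\<ge>0.
               Y (t, \<omega>) = (\<Sum>i\<le>k. Ys i (restrict (\<lambda>j. Hstop \<Delta> \<tau> \<xi> j (sig_ord \<tau> k i \<omega>) \<omega>) {1..k}, (t, \<omega>))
                   * (if sig_ord \<tau> k i \<omega> \<le> ereal t \<and> ereal t < sig_ord \<tau> k (Suc i) \<omega> then 1 else 0)))"
    by (rule bexE)
  note N2 = conjunct1[OF NR] and eq = conjunct2[OF NR]
  show ?thesis
  proof (intro exI conjI)
    show "goodN Q F \<Delta> \<tau> \<xi> k N" using N1 N2 unfolding goodN_def by blast
    show "\<forall>i\<le>k. Ys i \<in> borel_measurable (PiM {1..k} (\<lambda>_. Dmeas \<Delta>) \<Otimes>\<^sub>M Opt (space Q) F)" by (fact m)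
    show "\<forall>\<omega>\<in>space Q - N. \<forall>t\<ge>0. \<forall>i\<le>k. act \<tau> k i \<omega> t \<longrightarrow>
        Y (t, \<omega>) = Ys i (hpath \<Delta> \<tau> \<xi> k (sig_ord \<tau> k i \<omega>) \<omega>, (t, \<omega>))"
    proof (intro ballI allI impI)
      fix \<omega> t i assume \<omega>: "\<omega> \<in> space Q - N" and t: "0 \<le> t" and i: "i \<le> k" and a: "act \<tau> k i \<omega> t"
      have nn\<omega>: "\<forall>l\<in>{1..k}. 0 \<le> \<tau> l \<omega>" using nn \<omega> by blast
      have "Y (t, \<omega>) = (\<Sum>i\<le>k. Ys i (restrict (\<lambda>j. Hstop \<Delta> \<tau> \<xi> j (sig_ord \<tau> k i \<omega>) \<omega>) {1..k}, (t, \<omega>))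
                   * (if sig_ord \<tau> k i \<omega> \<le> ereal t \<and> ereal t < sig_ord \<tau> k (Suc i) \<omega> then 1 else 0))"
        by (rule mp[OF spec[OF bspec[OF eq \<omega>], of t] t])
      also have "\<dots> = Ys i (restrict (\<lambda>j. Hstop \<Delta> \<tau> \<xi> j (sig_ord \<tau> k i \<omega>) \<omega>) {1..k}, (t, \<omega>))"
        by (rule sum_act[OF nn\<omega> a i, where f="\<lambda>i. Ys i (restrict (\<lambda>j. Hstop \<Delta> \<tau> \<xi> j (sig_ord \<tau> k i \<omega>) \<omega>) {1..k}, (t, \<omega>))"])
      finally show "Y (t, \<omega>) = Ys i (hpath \<Delta> \<tau> \<xi> k (sig_ord \<tau> k i \<omega>) \<omega>, (t, \<omega>))"
        unfolding hpath_def .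
    qed
  qed
qed



definition PS :: "'a measure \<Rightarrow> (real \<Rightarrow> 'a set set) \<Rightarrow> 'e::metric_space \<Rightarrow> (nat \<Rightarrow> 'a \<Rightarrow> ereal)
    \<Rightarrow> (nat \<Rightarrow> 'a \<Rightarrow> 'e) \<Rightarrow> nat \<Rightarrow> ((real \<Rightarrow> 'e) \<times> (real \<times> 'a)) set \<Rightarrow> bool" where
  "PS Q F \<Delta> \<tau> \<xi> k S \<longleftrightarrow> (\<exists>\<Phi>. (\<forall>i\<le>k. Measurable.pred (Dmeas \<Delta> \<Otimes>\<^sub>M (PiM {1..k} (\<lambda>_. Dmeas \<Delta>) \<Otimes>\<^sub>M Opt (space Q) F)) (\<Phi> i)) \<and>
     (\<exists>N. goodN Q F \<Delta> \<tau> \<xi> k N \<and> (\<forall>\<omega>\<in>space Q - N. \<forall>t\<ge>0. \<forall>x\<in>Dspace \<Delta>. \<forall>i\<le>k. act \<tau> k i \<omega> t \<longrightarrow>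
        ((x, (t, \<omega>)) \<in> S \<longleftrightarrow> \<Phi> i (x, (hpath \<Delta> \<tau> \<xi> k (sig_ord \<tau> k i \<omega>) \<omega>, (t, \<omega>)))))))"

lemma split_sets:
  assumes os: "opt_split Q F \<Delta> \<tau> \<xi> k"
    and nn: "\<forall>\<omega>\<in>space Q. \<forall>l\<in>{1..k}. 0 \<le> \<tau> l \<omega>"
    and S: "S \<in> sets (Dmeas \<Delta> \<Otimes>\<^sub>M Opt (space Q) (Gstar Q F \<Delta> \<tau> \<xi> k))"
  shows "PS Q F \<Delta> \<tau> \<xi> k S"
proof -
  let ?D = "Dmeas \<Delta>" and ?O = "Opt (space Q) (Gstar Q F \<Delta> \<tau> \<xi> k)"
  let ?M = "Dmeas \<Delta> \<Otimes>\<^sub>M (PiM {1..k} (\<lambda>_. Dmeas \<Delta>) \<Otimes>\<^sub>M Opt (space Q) F)"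
  have "S \<in> sigma_sets (space ?D \<times> space ?O) {a \<times> b | a b. a \<in> sets ?D \<and> b \<in> sets ?O}"
    using S by (simp only: sets_pair_measure)
  then show ?thesis
  proof (induction rule: sigma_sets.induct)
    case (Basic S)
    then obtain a b where S: "S = a \<times> b" and a: "a \<in> sets ?D" and b: "b \<in> sets ?O" by blast
    have "indicator b \<in> borel_measurable ?O" using b by simp
    from os_act[OF os nn this] obtain Ys N where
      m: "\<forall>i\<le>k. Ys i \<in> borel_measurable (PiM {1..k} (\<lambda>_. Dmeas \<Delta>) \<Otimes>\<^sub>M Opt (space Q) F)" and
      N: "goodN Q F \<Delta> \<tau> \<xi> k N" and
      eq: "\<forall>\<omega>\<in>space Q - N. \<forall>t\<ge>0. \<forall>i\<le>k. act \<tau> k i \<omega> t \<longrightarrow>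
        (indicator b (t, \<omega>) :: real) = Ys i (hpath \<Delta> \<tau> \<xi> k (sig_ord \<tau> k i \<omega>) \<omega>, (t, \<omega>))" by blast
    show ?case unfolding PS_def
    proof (intro exI conjI allI impI)
      fix i assume i: "i \<le> k"
      have [measurable]: "Ys i \<in> borel_measurable (PiM {1..k} (\<lambda>_. Dmeas \<Delta>) \<Otimes>\<^sub>M Opt (space Q) F)" using m i by blast
      note a[measurable]
      show "Measurable.pred ?M (\<lambda>w. fst w \<in> a \<and> Ys i (snd w) = 1)" by measurable
    next
      show "goodN Q F \<Delta> \<tau> \<xi> k N" by (fact N)
      show "\<forall>\<omega>\<in>space Q - N. \<forall>t\<ge>0. \<forall>x\<in>Dspace \<Delta>. \<forall>i\<le>k. act \<tau> k i \<omega> t \<longrightarrow>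
        ((x, (t, \<omega>)) \<in> S \<longleftrightarrow> (\<lambda>i w. fst w \<in> a \<and> Ys i (snd w) = 1) i (x, (hpath \<Delta> \<tau> \<xi> k (sig_ord \<tau> k i \<omega>) \<omega>, (t, \<omega>))))"
      proof (intro ballI allI impI)
        fix \<omega> t x i assume as: "\<omega> \<in> space Q - N" "0 \<le> t" "x \<in> Dspace \<Delta>" "i \<le> k" "act \<tau> k i \<omega> t"
        have "(indicator b (t, \<omega>) :: real) = Ys i (hpath \<Delta> \<tau> \<xi> k (sig_ord \<tau> k i \<omega>) \<omega>, (t, \<omega>))"
          by (rule eq[rule_format, OF as(1,2,4,5)])
        then show "((x, (t, \<omega>)) \<in> S \<longleftrightarrow> (\<lambda>i w. fst w \<in> a \<and> Ys i (snd w) = 1) i (x, (hpath \<Delta> \<tau> \<xi> k (sig_ord \<tau> k i \<omega>) \<omega>, (t, \<omega>))))"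
          unfolding S by (auto simp: indicator_def split: if_splits)
      qed
    qed
  next
    case Empty
    show ?case unfolding PS_def
      by (intro exI[of _ "\<lambda>i w. False"] conjI exI[of _ "{}"] goodN_empty) auto
  next
    case (Compl S)
    then obtain \<Phi> N where m: "\<forall>i\<le>k. Measurable.pred ?M (\<Phi> i)" and N: "goodN Q F \<Delta> \<tau> \<xi> k N"
      and eq: "\<forall>\<omega>\<in>space Q - N. \<forall>t\<ge>0. \<forall>x\<in>Dspace \<Delta>. \<forall>i\<le>k. act \<tau> k i \<omega> t \<longrightarrow>
        ((x, (t, \<omega>)) \<in> S \<longleftrightarrow> \<Phi> i (x, (hpath \<Delta> \<tau> \<xi> k (sig_ord \<tau> k i \<omega>) \<omega>, (t, \<omega>))))"
      unfolding PS_def by blast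
    show ?case unfolding PS_def
    proof (intro exI[of _ "\<lambda>i w. \<not> \<Phi> i w"] conjI exI[of _ N] allI impI ballI)
      fix i assume "i \<le> k"
      then have [measurable]: "Measurable.pred ?M (\<Phi> i)" using m by blast
      show "Measurable.pred ?M (\<lambda>w. \<not> \<Phi> i w)" by measurable
    next
      show "goodN Q F \<Delta> \<tau> \<xi> k N" by (fact N)
      fix \<omega> t x i assume as: "\<omega> \<in> space Q - N" "0 \<le> t" "x \<in> Dspace \<Delta>" "i \<le> k" "act \<tau> k i \<omega> t"
      have e: "((x, (t, \<omega>)) \<in> S) = \<Phi> i (x, hpath \<Delta> \<tau> \<xi> k (sig_ord \<tau> k i \<omega>) \<omega>, t, \<omega>)"
        by (rule eq[rule_format, OF as])
      have "(x, (t, \<omega>)) \<in> space ?D \<times> space ?O" using as by auto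
      then show "((x, (t, \<omega>)) \<in> space ?D \<times> space ?O - S) = (\<not> \<Phi> i (x, hpath \<Delta> \<tau> \<xi> k (sig_ord \<tau> k i \<omega>) \<omega>, t, \<omega>))"
        using e by blast
    qed
  next
    case (Union A)
    have "\<forall>n. PS Q F \<Delta> \<tau> \<xi> k (A n)" using Union by blast
    then have ex: "\<forall>n. \<exists>\<Phi>. (\<forall>i\<le>k. Measurable.pred ?M (\<Phi> i)) \<and> (\<exists>N. goodN Q F \<Delta> \<tau> \<xi> k N \<and> (\<forall>\<omega>\<in>space Q - N. \<forall>t\<ge>0. \<forall>x\<in>Dspace \<Delta>. \<forall>i\<le>k. act \<tau> k i \<omega> t \<longrightarrow>
        ((x, (t, \<omega>)) \<in> A n \<longleftrightarrow> \<Phi> i (x, (hpath \<Delta> \<tau> \<xi> k (sig_ord \<tau> k i \<omega>) \<omega>, (t, \<omega>))))))"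
      unfolding PS_def by assumption
    obtain \<Phi> N where m: "\<forall>n. \<forall>i\<le>k. Measurable.pred ?M (\<Phi> n i)" and N: "\<forall>n. goodN Q F \<Delta> \<tau> \<xi> k (N n)"
      and eq: "\<forall>n. \<forall>\<omega>\<in>space Q - N n. \<forall>t\<ge>0. \<forall>x\<in>Dspace \<Delta>. \<forall>i\<le>k. act \<tau> k i \<omega> t \<longrightarrow>
        ((x, (t, \<omega>)) \<in> A n \<longleftrightarrow> \<Phi> n i (x, (hpath \<Delta> \<tau> \<xi> k (sig_ord \<tau> k i \<omega>) \<omega>, (t, \<omega>))))"
      using choice2[of "\<lambda>n \<Phi>. \<forall>i\<le>k. Measurable.pred ?M (\<Phi> i)" "\<lambda>n N. goodN Q F \<Delta> \<tau> \<xi> k N"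
          "\<lambda>n \<Phi> N. \<forall>\<omega>\<in>space Q - N. \<forall>t\<ge>0. \<forall>x\<in>Dspace \<Delta>. \<forall>i\<le>k. act \<tau> k i \<omega> t \<longrightarrow>
        ((x, (t, \<omega>)) \<in> A n \<longleftrightarrow> \<Phi> i (x, (hpath \<Delta> \<tau> \<xi> k (sig_ord \<tau> k i \<omega>) \<omega>, (t, \<omega>))))", OF ex] by (elim exE conjE)
    show ?case unfolding PS_def
    proof (intro exI[of _ "\<lambda>i w. \<exists>n. \<Phi> n i w"] conjI exI[of _ "\<Union>n. N n"] allI impI ballI)
      fix i assume i: "i \<le> k"
      have [measurable]: "\<And>n. Measurable.pred ?M (\<Phi> n i)" using m i by blast
      show "Measurable.pred ?M (\<lambda>w. \<exists>n. \<Phi> n i w)" by measurable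
    next
      show "goodN Q F \<Delta> \<tau> \<xi> k (\<Union>n. N n)" by (rule goodN_UN[OF N])
      fix \<omega> t x i assume as: "\<omega> \<in> space Q - (\<Union>n. N n)" "0 \<le> t" "x \<in> Dspace \<Delta>" "i \<le> k" "act \<tau> k i \<omega> t"
      have e: "((x, (t, \<omega>)) \<in> A n) = \<Phi> n i (x, hpath \<Delta> \<tau> \<xi> k (sig_ord \<tau> k i \<omega>) \<omega>, t, \<omega>)" for n
      proof -
        have "\<omega> \<in> space Q - N n" using as(1) by blast
        then show ?thesis by (rule eq[rule_format, OF _ as(2-5)])
      qed
      show "((x, (t, \<omega>)) \<in> (\<Union>n. A n)) = (\<exists>n. \<Phi> n i (x, hpath \<Delta> \<tau> \<xi> k (sig_ord \<tau> k i \<omega>) \<omega>, t, \<omega>))"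
        using e by simp
    qed
  qed
qed



definition PF :: "'a measure \<Rightarrow> (real \<Rightarrow> 'a set set) \<Rightarrow> 'e::metric_space \<Rightarrow> (nat \<Rightarrow> 'a \<Rightarrow> ereal)
    \<Rightarrow> (nat \<Rightarrow> 'a \<Rightarrow> 'e) \<Rightarrow> nat \<Rightarrow> ((real \<Rightarrow> 'e) \<times> (real \<times> 'a) \<Rightarrow> real) \<Rightarrow> bool" where
  "PF Q F \<Delta> \<tau> \<xi> k u \<longleftrightarrow> (\<exists>\<Phi>. (\<forall>i\<le>k. \<Phi> i \<in> borel_measurable (Dmeas \<Delta> \<Otimes>\<^sub>M (PiM {1..k} (\<lambda>_. Dmeas \<Delta>) \<Otimes>\<^sub>M Opt (space Q) F))) \<and>
     (\<exists>N. goodN Q F \<Delta> \<tau> \<xi> k N \<and> (\<forall>\<omega>\<in>space Q - N. \<forall>t\<ge>0. \<forall>x\<in>Dspace \<Delta>. \<forall>i\<le>k. act \<tau> k i \<omega> t \<longrightarrow>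
        u (x, (t, \<omega>)) = \<Phi> i (x, (hpath \<Delta> \<tau> \<xi> k (sig_ord \<tau> k i \<omega>) \<omega>, (t, \<omega>))))))"

lemma PF_nonneg:
  assumes os: "opt_split Q F \<Delta> \<tau> \<xi> k"
    and nn: "\<forall>\<omega>\<in>space Q. \<forall>l\<in>{1..k}. 0 \<le> \<tau> l \<omega>"
    and u: "u \<in> borel_measurable (Dmeas \<Delta> \<Otimes>\<^sub>M Opt (space Q) (Gstar Q F \<Delta> \<tau> \<xi> k))" "\<And>z. 0 \<le> u z"
  shows "PF Q F \<Delta> \<tau> \<xi> k u"
  using u
proof (induction rule: borel_measurable_induct_real)
  let ?M = "Dmeas \<Delta> \<Otimes>\<^sub>M (PiM {1..k} (\<lambda>_. Dmeas \<Delta>) \<Otimes>\<^sub>M Opt (space Q) F)"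
  case (set A)
  from split_sets[OF os nn set] obtain \<Phi> N where m: "\<forall>i\<le>k. Measurable.pred ?M (\<Phi> i)" and N: "goodN Q F \<Delta> \<tau> \<xi> k N"
      and eq: "\<forall>\<omega>\<in>space Q - N. \<forall>t\<ge>0. \<forall>x\<in>Dspace \<Delta>. \<forall>i\<le>k. act \<tau> k i \<omega> t \<longrightarrow>
        ((x, (t, \<omega>)) \<in> A \<longleftrightarrow> \<Phi> i (x, (hpath \<Delta> \<tau> \<xi> k (sig_ord \<tau> k i \<omega>) \<omega>, (t, \<omega>))))"
    unfolding PS_def by blast
  show ?case unfolding PF_def
  proof (intro exI[of _ "\<lambda>i w. if \<Phi> i w then 1 else 0"] conjI exI[of _ N] allI impI ballI)
    fix i assume "i \<le> k"
    then have [measurable]: "Measurable.pred ?M (\<Phi> i)" using m by blast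
    show "(\<lambda>w. if \<Phi> i w then 1 else 0 :: real) \<in> borel_measurable ?M" by measurable
  next
    show "goodN Q F \<Delta> \<tau> \<xi> k N" by (fact N)
    fix \<omega> t x i assume as: "\<omega> \<in> space Q - N" "0 \<le> t" "x \<in> Dspace \<Delta>" "i \<le> k" "act \<tau> k i \<omega> t"
    have e: "((x, (t, \<omega>)) \<in> A) = \<Phi> i (x, hpath \<Delta> \<tau> \<xi> k (sig_ord \<tau> k i \<omega>) \<omega>, t, \<omega>)"
      by (rule eq[rule_format, OF as])
    then show "indicator A (x, t, \<omega>) = (if \<Phi> i (x, hpath \<Delta> \<tau> \<xi> k (sig_ord \<tau> k i \<omega>) \<omega>, t, \<omega>) then 1 else 0)"
      by (simp add: indicator_def)
  qed
next
  let ?M = "Dmeas \<Delta> \<Otimes>\<^sub>M (PiM {1..k} (\<lambda>_. Dmeas \<Delta>) \<Otimes>\<^sub>M Opt (space Q) F)"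
  case (mult u c)
  then obtain \<Phi> N where m: "\<forall>i\<le>k. \<Phi> i \<in> borel_measurable ?M" and N: "goodN Q F \<Delta> \<tau> \<xi> k N"
      and eq: "\<forall>\<omega>\<in>space Q - N. \<forall>t\<ge>0. \<forall>x\<in>Dspace \<Delta>. \<forall>i\<le>k. act \<tau> k i \<omega> t \<longrightarrow>
        u (x, (t, \<omega>)) = \<Phi> i (x, (hpath \<Delta> \<tau> \<xi> k (sig_ord \<tau> k i \<omega>) \<omega>, (t, \<omega>)))"
    unfolding PF_def by blast
  show ?case unfolding PF_def
  proof (intro exI[of _ "\<lambda>i w. c * \<Phi> i w"] conjI exI[of _ N] allI impI ballI)
    fix i assume "i \<le> k"
    then have [measurable]: "\<Phi> i \<in> borel_measurable ?M" using m by blast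
    show "(\<lambda>w. c * \<Phi> i w) \<in> borel_measurable ?M" by measurable
  next
    show "goodN Q F \<Delta> \<tau> \<xi> k N" by (fact N)
    fix \<omega> t x i assume as: "\<omega> \<in> space Q - N" "0 \<le> t" "x \<in> Dspace \<Delta>" "i \<le> k" "act \<tau> k i \<omega> t"
    have "u (x, t, \<omega>) = \<Phi> i (x, hpath \<Delta> \<tau> \<xi> k (sig_ord \<tau> k i \<omega>) \<omega>, t, \<omega>)"
      by (rule eq[rule_format, OF as])
    then show "c * u (x, t, \<omega>) = c * \<Phi> i (x, hpath \<Delta> \<tau> \<xi> k (sig_ord \<tau> k i \<omega>) \<omega>, t, \<omega>)" by simp
  qed
next
  let ?M = "Dmeas \<Delta> \<Otimes>\<^sub>M (PiM {1..k} (\<lambda>_. Dmeas \<Delta>) \<Otimes>\<^sub>M Opt (space Q) F)"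
  case (add u v)
  obtain \<Phi> N where m: "\<forall>i\<le>k. \<Phi> i \<in> borel_measurable ?M" and N: "goodN Q F \<Delta> \<tau> \<xi> k N"
      and eq: "\<forall>\<omega>\<in>space Q - N. \<forall>t\<ge>0. \<forall>x\<in>Dspace \<Delta>. \<forall>i\<le>k. act \<tau> k i \<omega> t \<longrightarrow>
        u (x, (t, \<omega>)) = \<Phi> i (x, (hpath \<Delta> \<tau> \<xi> k (sig_ord \<tau> k i \<omega>) \<omega>, (t, \<omega>)))"
    using add unfolding PF_def by blast
  obtain \<Psi> N' where m': "\<forall>i\<le>k. \<Psi> i \<in> borel_measurable ?M" and N': "goodN Q F \<Delta> \<tau> \<xi> k N'"
      and eq': "\<forall>\<omega>\<in>space Q - N'. \<forall>t\<ge>0. \<forall>x\<in>Dspace \<Delta>. \<forall>i\<le>k. act \<tau> k i \<omega> t \<longrightarrow>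
        v (x, (t, \<omega>)) = \<Psi> i (x, (hpath \<Delta> \<tau> \<xi> k (sig_ord \<tau> k i \<omega>) \<omega>, (t, \<omega>)))"
    using add unfolding PF_def by blast
  show ?case unfolding PF_def
  proof (intro exI[of _ "\<lambda>i w. \<Psi> i w + \<Phi> i w"] conjI exI[of _ "N \<union> N'"] allI impI ballI)
    fix i assume "i \<le> k"
    then have [measurable]: "\<Phi> i \<in> borel_measurable ?M" "\<Psi> i \<in> borel_measurable ?M" using m m' by blast+
    show "(\<lambda>w. \<Psi> i w + \<Phi> i w) \<in> borel_measurable ?M" by measurable
  next
    show "goodN Q F \<Delta> \<tau> \<xi> k (N \<union> N')" using N N' by (rule goodN_Un)
    fix \<omega> t x i assume as: "\<omega> \<in> space Q - (N \<union> N')" "0 \<le> t" "x \<in> Dspace \<Delta>" "i \<le> k" "act \<tau> k i \<omega> t"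
    have a1: "\<omega> \<in> space Q - N" and a2: "\<omega> \<in> space Q - N'" using as(1) by blast+
    have "u (x, t, \<omega>) = \<Phi> i (x, hpath \<Delta> \<tau> \<xi> k (sig_ord \<tau> k i \<omega>) \<omega>, t, \<omega>)"
      by (rule eq[rule_format, OF a1 as(2-5)])
    moreover have "v (x, t, \<omega>) = \<Psi> i (x, hpath \<Delta> \<tau> \<xi> k (sig_ord \<tau> k i \<omega>) \<omega>, t, \<omega>)"
      by (rule eq'[rule_format, OF a2 as(2-5)])
    ultimately show "v (x, t, \<omega>) + u (x, t, \<omega>) = \<Psi> i (x, hpath \<Delta> \<tau> \<xi> k (sig_ord \<tau> k i \<omega>) \<omega>, t, \<omega>) + \<Phi> i (x, hpath \<Delta> \<tau> \<xi> k (sig_ord \<tau> k i \<omega>) \<omega>, t, \<omega>)"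
      by simp
  qed
next
  let ?M = "Dmeas \<Delta> \<Otimes>\<^sub>M (PiM {1..k} (\<lambda>_. Dmeas \<Delta>) \<Otimes>\<^sub>M Opt (space Q) F)"
  case (seq U)
  have "\<forall>n. PF Q F \<Delta> \<tau> \<xi> k (U n)" using seq by blast
  then have ex: "\<forall>n. \<exists>\<Phi>. (\<forall>i\<le>k. \<Phi> i \<in> borel_measurable ?M) \<and> (\<exists>N. goodN Q F \<Delta> \<tau> \<xi> k N \<and> (\<forall>\<omega>\<in>space Q - N. \<forall>t\<ge>0. \<forall>x\<in>Dspace \<Delta>. \<forall>i\<le>k. act \<tau> k i \<omega> t \<longrightarrow>
        U n (x, (t, \<omega>)) = \<Phi> i (x, (hpath \<Delta> \<tau> \<xi> k (sig_ord \<tau> k i \<omega>) \<omega>, (t, \<omega>)))))"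
    unfolding PF_def by assumption
  obtain \<Phi> N where m: "\<forall>n. \<forall>i\<le>k. \<Phi> n i \<in> borel_measurable ?M" and N: "\<forall>n. goodN Q F \<Delta> \<tau> \<xi> k (N n)"
      and eq: "\<forall>n. \<forall>\<omega>\<in>space Q - N n. \<forall>t\<ge>0. \<forall>x\<in>Dspace \<Delta>. \<forall>i\<le>k. act \<tau> k i \<omega> t \<longrightarrow>
        U n (x, (t, \<omega>)) = \<Phi> n i (x, (hpath \<Delta> \<tau> \<xi> k (sig_ord \<tau> k i \<omega>) \<omega>, (t, \<omega>)))"
    using choice2[of "\<lambda>n \<Phi>. \<forall>i\<le>k. \<Phi> i \<in> borel_measurable ?M" "\<lambda>n N. goodN Q F \<Delta> \<tau> \<xi> k N"
       "\<lambda>n \<Phi> N. \<forall>\<omega>\<in>space Q - N. \<forall>t\<ge>0. \<forall>x\<in>Dspace \<Delta>. \<forall>i\<le>k. act \<tau> k i \<omega> t \<longrightarrow>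
        U n (x, (t, \<omega>)) = \<Phi> i (x, (hpath \<Delta> \<tau> \<xi> k (sig_ord \<tau> k i \<omega>) \<omega>, (t, \<omega>)))", OF ex] by (elim exE conjE)
  show ?case unfolding PF_def
  proof (intro exI[of _ "\<lambda>i w. lim (\<lambda>n. \<Phi> n i w)"] conjI exI[of _ "\<Union>n. N n"] allI impI ballI)
    fix i assume i: "i \<le> k"
    have [measurable]: "\<And>n. \<Phi> n i \<in> borel_measurable ?M" using m i by blast
    show "(\<lambda>w. lim (\<lambda>n. \<Phi> n i w)) \<in> borel_measurable ?M" by measurable
  next
    show "goodN Q F \<Delta> \<tau> \<xi> k (\<Union>n. N n)" by (rule goodN_UN[OF N])
    fix \<omega> t x i assume as: "\<omega> \<in> space Q - (\<Union>n. N n)" "0 \<le> t" "x \<in> Dspace \<Delta>" "i \<le> k" "act \<tau> k i \<omega> t"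
    have sp: "(x, t, \<omega>) \<in> space (Dmeas \<Delta> \<Otimes>\<^sub>M Opt (space Q) (Gstar Q F \<Delta> \<tau> \<xi> k))"
      using as by (simp add: space_pair_measure)
    have "(\<lambda>n. U n (x, t, \<omega>)) \<longlonglongrightarrow> u (x, t, \<omega>)" by (rule seq(4)[OF sp])
    moreover have "U n (x, t, \<omega>) = \<Phi> n i (x, hpath \<Delta> \<tau> \<xi> k (sig_ord \<tau> k i \<omega>) \<omega>, t, \<omega>)" for n
    proof -
      have "\<omega> \<in> space Q - N n" using as(1) by blast
      then show ?thesis by (rule eq[rule_format, OF _ as(2-5)])
    qed
    ultimately show "u (x, t, \<omega>) = lim (\<lambda>n. \<Phi> n i (x, hpath \<Delta> \<tau> \<xi> k (sig_ord \<tau> k i \<omega>) \<omega>, t, \<omega>))"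
      by (simp add: limI)
  qed
qed

lemma PF_real:
  assumes os: "opt_split Q F \<Delta> \<tau> \<xi> k"
    and nn: "\<forall>\<omega>\<in>space Q. \<forall>l\<in>{1..k}. 0 \<le> \<tau> l \<omega>"
    and u[measurable]: "u \<in> borel_measurable (Dmeas \<Delta> \<Otimes>\<^sub>M Opt (space Q) (Gstar Q F \<Delta> \<tau> \<xi> k))"
  shows "PF Q F \<Delta> \<tau> \<xi> k u"
proof -
  let ?M = "Dmeas \<Delta> \<Otimes>\<^sub>M (PiM {1..k} (\<lambda>_. Dmeas \<Delta>) \<Otimes>\<^sub>M Opt (space Q) F)"
  have "PF Q F \<Delta> \<tau> \<xi> k (\<lambda>z. max (u z) 0)" by (rule PF_nonneg[OF os nn]) auto
  then obtain \<Phi> N where m: "\<forall>i\<le>k. \<Phi> i \<in> borel_measurable ?M" and N: "goodN Q F \<Delta> \<tau> \<xi> k N"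
      and eq: "\<forall>\<omega>\<in>space Q - N. \<forall>t\<ge>0. \<forall>x\<in>Dspace \<Delta>. \<forall>i\<le>k. act \<tau> k i \<omega> t \<longrightarrow>
        max (u (x, (t, \<omega>))) 0 = \<Phi> i (x, (hpath \<Delta> \<tau> \<xi> k (sig_ord \<tau> k i \<omega>) \<omega>, (t, \<omega>)))"
    unfolding PF_def by blast
  have "PF Q F \<Delta> \<tau> \<xi> k (\<lambda>z. max (- u z) 0)" by (rule PF_nonneg[OF os nn]) auto
  then obtain \<Psi> N' where m': "\<forall>i\<le>k. \<Psi> i \<in> borel_measurable ?M" and N': "goodN Q F \<Delta> \<tau> \<xi> k N'"
      and eq': "\<forall>\<omega>\<in>space Q - N'. \<forall>t\<ge>0. \<forall>x\<in>Dspace \<Delta>. \<forall>i\<le>k. act \<tau> k i \<omega> t \<longrightarrow>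
        max (- u (x, (t, \<omega>))) 0 = \<Psi> i (x, (hpath \<Delta> \<tau> \<xi> k (sig_ord \<tau> k i \<omega>) \<omega>, (t, \<omega>)))"
    unfolding PF_def by blast
  show ?thesis unfolding PF_def
  proof (intro exI[of _ "\<lambda>i w. \<Phi> i w - \<Psi> i w"] conjI exI[of _ "N \<union> N'"] allI impI ballI)
    fix i assume "i \<le> k"
    then have [measurable]: "\<Phi> i \<in> borel_measurable ?M" "\<Psi> i \<in> borel_measurable ?M" using m m' by blast+
    show "(\<lambda>w. \<Phi> i w - \<Psi> i w) \<in> borel_measurable ?M" by measurable
  next
    show "goodN Q F \<Delta> \<tau> \<xi> k (N \<union> N')" using N N' by (rule goodN_Un)
    fix \<omega> t x i assume as: "\<omega> \<in> space Q - (N \<union> N')" "0 \<le> t" "x \<in> Dspace \<Delta>" "i \<le> k" "act \<tau> k i \<omega> t"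
    have a1: "\<omega> \<in> space Q - N" and a2: "\<omega> \<in> space Q - N'" using as(1) by blast+
    have "max (u (x, (t, \<omega>))) 0 = \<Phi> i (x, (hpath \<Delta> \<tau> \<xi> k (sig_ord \<tau> k i \<omega>) \<omega>, (t, \<omega>)))"
      by (rule eq[rule_format, OF a1 as(2-5)])
    moreover have "max (- u (x, (t, \<omega>))) 0 = \<Psi> i (x, (hpath \<Delta> \<tau> \<xi> k (sig_ord \<tau> k i \<omega>) \<omega>, (t, \<omega>)))"
      by (rule eq'[rule_format, OF a2 as(2-5)])
    ultimately have "max (u (x, (t, \<omega>))) 0 = \<Phi> i (x, (hpath \<Delta> \<tau> \<xi> k (sig_ord \<tau> k i \<omega>) \<omega>, (t, \<omega>)))"
      "max (- u (x, (t, \<omega>))) 0 = \<Psi> i (x, (hpath \<Delta> \<tau> \<xi> k (sig_ord \<tau> k i \<omega>) \<omega>, (t, \<omega>)))" by simp_all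
    then show "u (x, t, \<omega>) = \<Phi> i (x, hpath \<Delta> \<tau> \<xi> k (sig_ord \<tau> k i \<omega>) \<omega>, t, \<omega>) - \<Psi> i (x, hpath \<Delta> \<tau> \<xi> k (sig_ord \<tau> k i \<omega>) \<omega>, t, \<omega>)"
      by linarith
  qed
qed



lemma cadlag_step:
  fixes c :: ereal and a b :: "'e::topological_space"
  shows "cadlag_Rplus (\<lambda>s. if c \<le> ereal s then a else b)"
  unfolding cadlag_Rplus_def
proof (intro conjI allI impI)
  let ?f = "\<lambda>s. if c \<le> ereal s then a else b"
  fix t :: real assume "0 \<le> t"
  have ev: "eventually (\<lambda>s. ?f s = ?f t) (at_right t)"
  proof (cases "c \<le> ereal t")
    case True
    show ?thesis unfolding eventually_at_right_field
    proof (intro exI[of _ "t + 1"] conjI allI impI)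
      fix y assume "t < y"
      then have "ereal t \<le> ereal y" by simp
      with True have "c \<le> ereal y" by (rule order_trans)
      then show "?f y = ?f t" using True by simp
    qed simp
  next
    case False
    then have "ereal t < c" by simp
    then obtain z where z0: "ereal t < ereal z" "ereal z < c" using ereal_dense2 by blast
    then have z: "t < z" "ereal z < c" by simp_all
    show ?thesis unfolding eventually_at_right_field
    proof (intro exI[of _ z] conjI allI impI)
      fix y assume "t < y" "y < z"
      then have "ereal y < ereal z" by simp
      then have "ereal y < c" using z(2) by (rule order.strict_trans)
      then have "\<not> c \<le> ereal y" by (simp add: not_le)
      then show "?f y = ?f t" using False by simp
    qed (use z in simp)
  qed
  show "continuous (at_right t) ?f" unfolding continuous_within
    using tendsto_eventually[OF ev] .
next
  let ?f = "\<lambda>s. if c \<le> ereal s then a else b"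
  fix t :: real assume "0 < t"
  show "\<exists>l. (?f \<longlongrightarrow> l) (at_left t)"
  proof (cases "c < ereal t")
    case True
    then obtain z where z0: "c < ereal z" "ereal z < ereal t" using ereal_dense2 by blast
    then have z: "z < t" "c < ereal z" by simp_all
    have "eventually (\<lambda>s. ?f s = a) (at_left t)" unfolding eventually_at_left_field
    proof (intro exI[of _ z] conjI allI impI)
      fix y assume "z < y" "y < t"
      then have "ereal z < ereal y" by simp
      with z(2) have "c < ereal y" by (rule order.strict_trans)
      then have "c \<le> ereal y" by (rule less_imp_le)
      then show "?f y = a" by simp
    qed (use z in simp)
    then have "(?f \<longlongrightarrow> a) (at_left t)" by (rule tendsto_eventually)
    then show ?thesis by blast
  next
    case False
    have "eventually (\<lambda>s. ?f s = b) (at_left t)" unfolding eventually_at_left_field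
    proof (intro exI[of _ "t - 1"] conjI allI impI)
      fix y assume "t - 1 < y" "y < t"
      then have "ereal y < ereal t" by simp
      moreover have "ereal t \<le> c" using False by (simp add: not_less)
      ultimately have "ereal y < c" by (rule order.strict_trans2)
      then have "\<not> c \<le> ereal y" by (simp add: not_le)
      then show "?f y = b" by simp
    qed simp
    then have "(?f \<longlongrightarrow> b) (at_left t)" by (rule tendsto_eventually)
    then show ?thesis by blast
  qed
qed

lemma const_Dspace: "(\<lambda>_. \<Delta>) \<in> Dspace (\<Delta>::'e::metric_space)"
  using cadlag_step[of "\<infinity>" \<Delta> \<Delta>] unfolding Dspace_def by simp

lemma Hproc_Dspace:
  fixes \<Delta> :: "'e::metric_space"
  assumes "0 \<le> \<tau> l \<omega>"
  shows "Hproc \<Delta> \<tau> \<xi> l \<omega> \<in> Dspace \<Delta>"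
proof -
  have "\<And>t. t < 0 \<Longrightarrow> \<not> \<tau> l \<omega> \<le> ereal t"
  proof -
    fix t :: real assume "t < 0"
    then have "ereal t < 0" by simp
    then have "ereal t < \<tau> l \<omega>" using assms by (rule order.strict_trans2)
    then show "\<not> \<tau> l \<omega> \<le> ereal t" by (simp add: not_le)
  qed
  then show ?thesis unfolding Dspace_def Hproc_eq using cadlag_step[of "\<tau> l \<omega>" "\<xi> l \<omega>" \<Delta>] by simp
qed

lemma id_skor_Lambda: "(\<lambda>x. x) \<in> skor_Lambda"
  unfolding skor_Lambda_def
proof (intro CollectI conjI)
  show "strict_mono_on {0..} (\<lambda>x::real. x)" by (simp add: strict_mono_on_def)
  show "(\<lambda>x::real. x) ` {0..} = {0..}" by simp
  show "\<exists>C. C-lipschitz_on {0..} (\<lambda>x::real. x)" using lipschitz_on_id by blast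
  have sub: "{\<bar>ln (((s::real) - t) / (s - t))\<bar> | s t. 0 \<le> t \<and> t < s} \<subseteq> {0}" by auto
  show "bdd_above {\<bar>ln (((s::real) - t) / (s - t))\<bar> | s t. 0 \<le> t \<and> t < s}"
    by (rule bdd_above_mono[OF _ sub]) simp
qed

lemma skor_dist_pos:
  fixes \<Delta> :: "'e::metric_space"
  assumes y: "y \<in> Dspace \<Delta>" and ne: "y \<noteq> (\<lambda>_. \<Delta>)"
  shows "0 < skor_dist y (\<lambda>_. \<Delta>)"
proof -
  obtain s0 where s0: "y s0 \<noteq> \<Delta>" using ne by blast
  have "0 \<le> s0" using y s0 unfolding Dspace_def by (metis (mono_tags) mem_Collect_eq not_le)
  define \<delta> where "\<delta> = min (dist (y s0) \<Delta>) 1"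
  have \<delta>: "0 < \<delta>" using s0 by (simp add: \<delta>_def)
  define D where "D u = Sup {min (dist (y (min t u)) \<Delta>) 1 | t. 0 \<le> t}" for u
  have Dl: "\<And>l u. skor_du y (\<lambda>_. \<Delta>) l u = D u" unfolding skor_du_def D_def by simp
  have D1: "D u \<le> 1" for u unfolding D_def by (rule cSup_least) auto
  have bdd: "bdd_above {min (dist (y (min t u)) \<Delta>) 1 | t. 0 \<le> t}" for u
    by (rule bdd_aboveI[of _ 1]) auto
  have D\<delta>: "\<delta> \<le> D u" if "s0 \<le> u" for u
  proof -
    have "\<delta> \<in> {min (dist (y (min t u)) \<Delta>) 1 | t. 0 \<le> t}"
      using that \<open>0 \<le> s0\<close> unfolding \<delta>_def by (intro CollectI exI[of _ s0]) (simp add: min_absorb1)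
    then show ?thesis unfolding D_def by (rule cSup_upper[OF _ bdd])
  qed
  define I where "I = (\<integral>\<^sup>+ u. ennreal (exp (- u) * D u) * indicator {0..} u \<partial>lborel)"
  have "I \<le> (\<integral>\<^sup>+ u. ennreal (u ^ 0 * exp (- u)) * indicator {0..} u \<partial>lborel)"
    unfolding I_def
  proof (rule nn_integral_mono)
    fix u :: real
    have "exp (- u) * D u \<le> u ^ 0 * exp (- u)" using D1[of u] by simp
    then show "ennreal (exp (- u) * D u) * indicator {0..} u \<le> ennreal (u ^ 0 * exp (- u)) * indicator {0..} u"
      by (intro mult_right_mono ennreal_leI) auto
  qed
  also have "\<dots> = 1" using nn_intergal_power_times_exp_Ici[of 0] by simp
  finally have Ifin: "I < \<infinity>" by (simp add: le_less_trans)
  define c0 where "c0 = \<delta> * exp (- (s0 + 1))"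
  have c0: "0 < c0" using \<delta> by (simp add: c0_def)
  have "ennreal c0 = (\<integral>\<^sup>+ u. ennreal c0 * indicator {s0..s0+1} u \<partial>lborel)"
    by (simp add: nn_integral_cmult_indicator)
  also have "\<dots> \<le> I" unfolding I_def
  proof (rule nn_integral_mono)
    fix u :: real
    show "ennreal c0 * indicator {s0..s0 + 1} u \<le> ennreal (exp (- u) * D u) * indicator {0..} u"
    proof (cases "u \<in> {s0..s0+1}")
      case True
      then have "0 \<le> u" using \<open>0 \<le> s0\<close> by auto
      have "exp (- (s0 + 1)) \<le> exp (- u)" using True by simp
      moreover have "\<delta> \<le> D u" using True D\<delta> by auto
      ultimately have "c0 \<le> exp (- u) * D u" unfolding c0_def using \<delta>
        by (metis mult.commute mult_mono exp_ge_zero less_imp_le)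
      then show ?thesis using True \<open>0 \<le> u\<close> by (simp add: ennreal_leI)
    qed simp
  qed
  finally have cI: "ennreal c0 \<le> I" .
  have "enn2real (ennreal c0) \<le> enn2real I" using cI Ifin by (intro enn2real_mono) (auto simp: top_unique)
  then have Ic0: "c0 \<le> enn2real I" using c0 by simp
  have "c0 \<le> skor_dist y (\<lambda>_. \<Delta>)" unfolding skor_dist_def
  proof (rule cInf_greatest)
    show "{max (skor_gamma l) (enn2real (\<integral>\<^sup>+ u. ennreal (exp (- u) * skor_du y (\<lambda>_. \<Delta>) l u) * indicator {0..} u \<partial>lborel)) | l. l \<in> skor_Lambda} \<noteq> {}"
      using id_skor_Lambda by blast
  next
    fix x assume "x \<in> {max (skor_gamma l) (enn2real (\<integral>\<^sup>+ u. ennreal (exp (- u) * skor_du y (\<lambda>_. \<Delta>) l u) * indicator {0..} u \<partial>lborel)) | l. l \<in> skor_Lambda}"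
    then obtain l where "x = max (skor_gamma l) (enn2real I)" unfolding Dl I_def by blast
    then show "c0 \<le> x" using Ic0 by simp
  qed
  then show ?thesis using c0 by simp
qed

lemma const_sets: 
  fixes \<Delta> :: "'e::metric_space"
  shows "{\<lambda>_. \<Delta>} \<in> sets (Dmeas \<Delta>)"
proof -
  let ?G = "{U. U \<subseteq> Dspace \<Delta> \<and> (\<forall>x\<in>U. \<exists>e>0. \<forall>y\<in>Dspace \<Delta>. skor_dist x y < e \<longrightarrow> y \<in> U)}"
  have sets: "sets (Dmeas \<Delta>) = sigma_sets (Dspace \<Delta>) ?G"
    unfolding Dmeas_def by (rule sets_measure_of) auto
  have U: "Dspace \<Delta> - {\<lambda>_. \<Delta>} \<in> ?G"
  proof (intro CollectI conjI ballI)
    fix x assume x: "x \<in> Dspace \<Delta> - {\<lambda>_. \<Delta>}"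
    show "\<exists>e>0. \<forall>y\<in>Dspace \<Delta>. skor_dist x y < e \<longrightarrow> y \<in> Dspace \<Delta> - {\<lambda>_. \<Delta>}"
      using skor_dist_pos[of x \<Delta>] x by (intro exI[of _ "skor_dist x (\<lambda>_. \<Delta>)"]) auto
  qed auto
  have "Dspace \<Delta> - (Dspace \<Delta> - {\<lambda>_. \<Delta>}) \<in> sigma_sets (Dspace \<Delta>) ?G"
    using U by (intro sigma_sets.Compl sigma_sets.Basic)
  moreover have "Dspace \<Delta> - (Dspace \<Delta> - {\<lambda>_. \<Delta>}) = {\<lambda>_. \<Delta>}" using const_Dspace by auto
  ultimately show ?thesis using sets by simp
qed



theorem mainTheorem17:
  fixes Q :: "'a measure" and F :: "real \<Rightarrow> 'a set set" and \<Delta> :: "'e::polish_space"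
    and \<tau> :: "nat \<Rightarrow> 'a \<Rightarrow> ereal" and \<xi> :: "nat \<Rightarrow> 'a \<Rightarrow> 'e" and m :: nat
  assumes "prob_space Q"
    and "\<And>t. 0 \<le> t \<Longrightarrow> sigma_algebra (space Q) (F t) \<and> F t \<subseteq> sets Q"
    and "\<And>s t. 0 \<le> s \<Longrightarrow> s \<le> t \<Longrightarrow> F s \<subseteq> F t"
    and "\<And>t. 0 \<le> t \<Longrightarrow> F t = (\<Inter>s\<in>{t<..}. F s)"
    and "nullsig Q (Finf (space Q) F) \<subseteq> F 0"
    and "\<And>j. j \<in> {1..m} \<Longrightarrow> \<tau> j \<in> borel_measurable Q \<and> (\<forall>\<omega>\<in>space Q. 0 \<le> \<tau> j \<omega>)"
    and "\<And>j. j \<in> {1..m} \<Longrightarrow> \<xi> j \<in> borel_measurable Q \<and> (\<forall>\<omega>\<in>space Q. \<xi> j \<omega> \<noteq> \<Delta>)"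
    and "m > 1"
    and "opt_split Q F \<Delta> \<tau> \<xi> (m - 1)"
    and "opt_split_marked Q F \<Delta> \<tau> \<xi> m"
  shows "opt_split Q F \<Delta> \<tau> \<xi> m"
proof -
  define k where "k = m - 1"
  have mk: "m = Suc k" using \<open>m > 1\<close> by (simp add: k_def)
  have nnm: "\<forall>\<omega>\<in>space Q. \<forall>l\<in>{1..m}. 0 \<le> \<tau> l \<omega>" using assms(6) by blast
  have nnk: "\<forall>\<omega>\<in>space Q. \<forall>l\<in>{1..k}. 0 \<le> \<tau> l \<omega>" using nnm mk by auto
  have osk: "opt_split Q F \<Delta> \<tau> \<xi> k" using assms(9) by (simp add: k_def)
  let ?c = "\<lambda>_::real. \<Delta>"
  let ?Dm = "Dmeas \<Delta>" and ?OF = "Opt (space Q) F"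
  let ?M' = "PiM {1..m} (\<lambda>_. Dmeas \<Delta>) \<Otimes>\<^sub>M Opt (space Q) F"
  show ?thesis unfolding opt_split_def
  proof (intro allI impI)
    fix Y :: "real \<times> 'a \<Rightarrow> real" assume Y: "Y \<in> borel_measurable (Opt (space Q) (Gstar Q F \<Delta> \<tau> \<xi> m))"
    have "\<exists>Y' \<in> borel_measurable (Opt (space Q) (Gstar Q F \<Delta> \<tau> \<xi> (m - 1))).
       \<exists>Y'' \<in> borel_measurable (Dmeas \<Delta> \<Otimes>\<^sub>M Opt (space Q) (Gstar Q F \<Delta> \<tau> \<xi> (m - 1))).
         \<forall>\<omega>\<in>space Q. \<forall>t\<ge>0.
           Y (t, \<omega>) = Y' (t, \<omega>) * (if ereal t < \<tau> m \<omega> then 1 else 0)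
                      + Y'' (Hproc \<Delta> \<tau> \<xi> m \<omega>, (t, \<omega>)) * (if \<tau> m \<omega> \<le> ereal t then 1 else 0)"
      by (rule mp[OF spec[OF assms(10)[unfolded opt_split_marked_def], of Y] Y])
    then obtain Y' Y'' where Y': "Y' \<in> borel_measurable (Opt (space Q) (Gstar Q F \<Delta> \<tau> \<xi> k))"
      and Y'': "Y'' \<in> borel_measurable (Dmeas \<Delta> \<Otimes>\<^sub>M Opt (space Q) (Gstar Q F \<Delta> \<tau> \<xi> k))"
      and YY: "\<forall>\<omega>\<in>space Q. \<forall>t\<ge>0.
           Y (t, \<omega>) = Y' (t, \<omega>) * (if ereal t < \<tau> m \<omega> then 1 else 0)
                      + Y'' (Hproc \<Delta> \<tau> \<xi> m \<omega>, (t, \<omega>)) * (if \<tau> m \<omega> \<le> ereal t then 1 else 0)"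
      unfolding k_def by (elim bexE)
    from os_act[OF osk nnk Y'] obtain Ys' N1 where
      m1: "\<forall>i\<le>k. Ys' i \<in> borel_measurable (PiM {1..k} (\<lambda>_. Dmeas \<Delta>) \<Otimes>\<^sub>M Opt (space Q) F)" and
      N1: "goodN Q F \<Delta> \<tau> \<xi> k N1" and
      eq1: "\<forall>\<omega>\<in>space Q - N1. \<forall>t\<ge>0. \<forall>i\<le>k. act \<tau> k i \<omega> t \<longrightarrow>
        Y' (t, \<omega>) = Ys' i (hpath \<Delta> \<tau> \<xi> k (sig_ord \<tau> k i \<omega>) \<omega>, (t, \<omega>))"
      by blast
    from PF_real[OF osk nnk Y''] obtain \<Phi> N2 where
      m2: "\<forall>i\<le>k. \<Phi> i \<in> borel_measurable (Dmeas \<Delta> \<Otimes>\<^sub>M (PiM {1..k} (\<lambda>_. Dmeas \<Delta>) \<Otimes>\<^sub>M Opt (space Q) F))" and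
      N2: "goodN Q F \<Delta> \<tau> \<xi> k N2" and
      eq2: "\<forall>\<omega>\<in>space Q - N2. \<forall>t\<ge>0. \<forall>x\<in>Dspace \<Delta>. \<forall>i\<le>k. act \<tau> k i \<omega> t \<longrightarrow>
        Y'' (x, (t, \<omega>)) = \<Phi> i (x, (hpath \<Delta> \<tau> \<xi> k (sig_ord \<tau> k i \<omega>) \<omega>, (t, \<omega>)))"
      unfolding PF_def by blast
    define Ys where "Ys i w = (if fst w m = ?c then (if i \<le> k then Ys' i (restrict (fst w) {1..k}, snd w) else 0)
        else \<Phi> (i - 1) (fst w m, (restrict (fst w) {1..k}, snd w)))" for i w
    have g1: "(\<lambda>w. (restrict (fst w) {1..k}, snd w)) \<in> measurable ?M' (PiM {1..k} (\<lambda>_. Dmeas \<Delta>) \<Otimes>\<^sub>M ?OF)"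
      by (intro measurable_Pair measurable_compose[OF measurable_fst measurable_restrict_subset] measurable_snd)
        (auto simp: mk)
    have g2: "(\<lambda>w. fst w m) \<in> measurable ?M' ?Dm"
      by (rule measurable_compose[OF measurable_fst measurable_component_singleton]) (simp add: mk)
    have g3: "(\<lambda>w. (fst w m, (restrict (fst w) {1..k}, snd w))) \<in> measurable ?M' (?Dm \<Otimes>\<^sub>M (PiM {1..k} (\<lambda>_. Dmeas \<Delta>) \<Otimes>\<^sub>M ?OF))"
      using g2 g1 by (rule measurable_Pair)
    have P: "{w \<in> space ?M'. fst w m = ?c} \<in> sets ?M'"
    proof -
      have "{w \<in> space ?M'. fst w m = ?c} = (\<lambda>w. fst w m) -` {?c} \<inter> space ?M'" by auto
      then show ?thesis using measurable_sets[OF g2 const_sets] by simp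
    qed
    have meas: "\<forall>i\<le>m. Ys i \<in> borel_measurable ?M'"
    proof (intro allI impI)
      fix i assume "i \<le> m"
      then have im: "i - 1 \<le> k" using mk by simp
      have A: "(\<lambda>w. if i \<le> k then Ys' i (restrict (fst w) {1..k}, snd w) else 0) \<in> borel_measurable ?M'"
      proof (cases "i \<le> k")
        case True then show ?thesis using measurable_compose[OF g1, of "Ys' i"] m1 by simp
      qed simp
      have B: "(\<lambda>w. \<Phi> (i - 1) (fst w m, (restrict (fst w) {1..k}, snd w))) \<in> borel_measurable ?M'"
        using measurable_compose[OF g3, of "\<Phi> (i - 1)"] m2 im by simp
      show "Ys i \<in> borel_measurable ?M'" unfolding Ys_def
        by (rule measurable_If[OF A B P])
    qed
    have g: "goodN Q F \<Delta> \<tau> \<xi> m (N1 \<union> N2)"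
      using goodN_mono[OF goodN_Un[OF N1 N2], of m] mk by simp
    have eqn: "\<forall>\<omega> \<in> space Q - (N1 \<union> N2). \<forall>t\<ge>0.
               Y (t, \<omega>) = (\<Sum>i\<le>m. Ys i (restrict (\<lambda>j. Hstop \<Delta> \<tau> \<xi> j (sig_ord \<tau> m i \<omega>) \<omega>) {1..m}, (t, \<omega>))
                   * (if sig_ord \<tau> m i \<omega> \<le> ereal t \<and> ereal t < sig_ord \<tau> m (Suc i) \<omega> then 1 else 0))"
    proof (intro ballI allI impI)
      fix \<omega> t assume \<omega>: "\<omega> \<in> space Q - (N1 \<union> N2)" and t: "0 \<le> (t::real)"
      have nnm\<omega>: "\<forall>l\<in>{1..m}. 0 \<le> \<tau> l \<omega>" and nnk\<omega>: "\<forall>l\<in>{1..k}. 0 \<le> \<tau> l \<omega>" using nnm nnk \<omega> by auto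
      obtain i where i: "i \<le> m" "act \<tau> m i \<omega> t" using act_ex[where \<tau>=\<tau> and \<omega>=\<omega>, OF nnm\<omega> t] by blast
      obtain j where j: "j \<le> k" "act \<tau> k j \<omega> t" using act_ex[where \<tau>=\<tau> and \<omega>=\<omega>, OF nnk\<omega> t] by blast
      define R where "R = sig_ord \<tau> m i \<omega>"
      define R' where "R' = sig_ord \<tau> k j \<omega>"
      have R: "R \<noteq> -\<infinity>" using sig_ord_nonneg[where \<tau>=\<tau> and \<omega>=\<omega> and i=i, OF nnm\<omega>] unfolding R_def by auto
      have R': "R' \<noteq> -\<infinity>" using sig_ord_nonneg[where \<tau>=\<tau> and \<omega>=\<omega> and i=j, OF nnk\<omega>] unfolding R'_def by auto
      define y where "y = restrict (\<lambda>j. Hstop \<Delta> \<tau> \<xi> j R \<omega>) {1..m}"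
      have "(\<Sum>i'\<le>m. Ys i' (restrict (\<lambda>j. Hstop \<Delta> \<tau> \<xi> j (sig_ord \<tau> m i' \<omega>) \<omega>) {1..m}, (t, \<omega>))
                   * (if sig_ord \<tau> m i' \<omega> \<le> ereal t \<and> ereal t < sig_ord \<tau> m (Suc i') \<omega> then 1 else 0))
          = Ys i (y, (t, \<omega>))"
        unfolding y_def R_def by (rule sum_act[OF nnm\<omega> i(2) i(1), where f="\<lambda>i'. Ys i' (restrict (\<lambda>j. Hstop \<Delta> \<tau> \<xi> j (sig_ord \<tau> m i' \<omega>) \<omega>) {1..m}, (t, \<omega>))"])
      moreover
      have ym: "y m = (\<lambda>s. if \<tau> m \<omega> \<le> ereal t \<and> \<tau> m \<omega> \<le> ereal s then \<xi> m \<omega> else \<Delta>)"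
      proof -
        have "m \<in> {1..m}" using mk by simp
        then have "(\<tau> m \<omega> \<le> R) = (\<tau> m \<omega> \<le> ereal t)" unfolding R_def by (rule act_le[OF nnm\<omega> i(2) i(1)])
        then show ?thesis using \<open>m \<in> {1..m}\<close> unfolding y_def by (simp add: Hstop_eq[OF R])
      qed
      moreover
      have yk: "restrict y {1..k} = hpath \<Delta> \<tau> \<xi> k R' \<omega>"
      proof
        fix l
        show "restrict y {1..k} l = hpath \<Delta> \<tau> \<xi> k R' \<omega> l"
        proof (cases "l \<in> {1..k}")
          case True
          then have lm: "l \<in> {1..m}" using mk by auto
          have "(\<tau> l \<omega> \<le> R) = (\<tau> l \<omega> \<le> ereal t)" unfolding R_def by (rule act_le[OF nnm\<omega> i(2) i(1) lm])
          moreover have "(\<tau> l \<omega> \<le> R') = (\<tau> l \<omega> \<le> ereal t)" unfolding R'_def by (rule act_le[OF nnk\<omega> j(2) j(1) True])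
          ultimately show ?thesis using True lm unfolding y_def hpath_def by (simp add: Hstop_eq[OF R] Hstop_eq[OF R'])
        next
          case False
          then show ?thesis unfolding hpath_def restrict_apply by (simp only: if_not_P if_False)
        qed
      qed
      moreover
      have cnt: "i = j + (if \<tau> m \<omega> \<le> ereal t then 1 else 0)"
        using act_cnt[OF nnm\<omega> i(2) i(1)] act_cnt[OF nnk\<omega> j(2) j(1)] cnt_Suc[of \<tau> k \<omega> t] mk by simp
      moreover
      have \<omega>Q: "\<omega> \<in> space Q" and \<omega>1: "\<omega> \<in> space Q - N1" and \<omega>2: "\<omega> \<in> space Q - N2" using \<omega> by blast+
      have Yeq: "Y (t, \<omega>) = Y' (t, \<omega>) * (if ereal t < \<tau> m \<omega> then 1 else 0)
                      + Y'' (Hproc \<Delta> \<tau> \<xi> m \<omega>, (t, \<omega>)) * (if \<tau> m \<omega> \<le> ereal t then 1 else 0)"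
        by (rule mp[OF spec[OF bspec[OF YY \<omega>Q], of t] t])
      moreover
      have "Y (t, \<omega>) = Ys i (y, (t, \<omega>))"
      proof (cases "\<tau> m \<omega> \<le> ereal t")
        case True
        have yH: "y m = Hproc \<Delta> \<tau> \<xi> m \<omega>" using ym True by (simp add: Hproc_eq)
        have "\<xi> m \<omega> \<noteq> \<Delta>" using assms(7)[of m] \<omega> mk by auto
        then have "y m t \<noteq> \<Delta>" using ym True by simp
        then have ync: "y m \<noteq> ?c" by auto
        have ij: "i - 1 = j" using cnt True by simp
        have HD: "Hproc \<Delta> \<tau> \<xi> m \<omega> \<in> Dspace \<Delta>" using nnm\<omega> mk by (intro Hproc_Dspace) auto
        have "Ys i (y, (t, \<omega>)) = \<Phi> j (Hproc \<Delta> \<tau> \<xi> m \<omega>, (hpath \<Delta> \<tau> \<xi> k R' \<omega>, (t, \<omega>)))"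
          unfolding Ys_def using ync yH yk ij by simp
        also have "\<dots> = Y'' (Hproc \<Delta> \<tau> \<xi> m \<omega>, (t, \<omega>))"
          using eq2[rule_format, OF \<omega>2 t HD j(1) j(2)] unfolding R'_def by simp
        finally show ?thesis using Yeq True by (simp add: not_less)
      next
        case False
        have yc: "y m = ?c" using ym False by simp
        have ij: "i = j" using cnt False by simp
        have "Ys i (y, (t, \<omega>)) = Ys' j (hpath \<Delta> \<tau> \<xi> k R' \<omega>, (t, \<omega>))"
          unfolding Ys_def using yc yk ij j by simp
        also have "\<dots> = Y' (t, \<omega>)"
          using eq1[rule_format, OF \<omega>1 t j(1) j(2)] unfolding R'_def by simp
        finally show ?thesis using Yeq False by (simp add: not_le)
      qed
      ultimately show "Y (t, \<omega>) = (\<Sum>i\<le>m. Ys i (restrict (\<lambda>j. Hstop \<Delta> \<tau> \<xi> j (sig_ord \<tau> m i \<omega>) \<omega>) {1..m}, (t, \<omega>))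
                   * (if sig_ord \<tau> m i \<omega> \<le> ereal t \<and> ereal t < sig_ord \<tau> m (Suc i) \<omega> then 1 else 0))"
        by simp
    qed
    obtain B where B: "B \<in> sigma_sets (space Q) (Hsig (space Q) \<Delta> \<tau> \<xi> m \<infinity> \<union> Finf (space Q) F)"
      "B \<in> sets Q" "emeasure Q B = 0" "N1 \<union> N2 \<subseteq> B" and NN: "N1 \<union> N2 \<in> Nstar Q F \<Delta> \<tau> \<xi> m"
      using g unfolding goodN_def by blast
    show "\<exists>Ys :: nat \<Rightarrow> (nat \<Rightarrow> real \<Rightarrow> 'e) \<times> (real \<times> 'a) \<Rightarrow> real.
         (\<forall>i\<le>m. Ys i \<in> borel_measurable (PiM {1..m} (\<lambda>_. Dmeas \<Delta>) \<Otimes>\<^sub>M Opt (space Q) F)) \<and>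
         (\<exists>N \<in> Nstar Q F \<Delta> \<tau> \<xi> m.
            (\<exists>B \<in> sigma_sets (space Q) (Hsig (space Q) \<Delta> \<tau> \<xi> m \<infinity> \<union> Finf (space Q) F).
                B \<in> sets Q \<and> emeasure Q B = 0 \<and> N \<subseteq> B) \<and>
            (\<forall>\<omega> \<in> space Q - N. \<forall>t\<ge>0.
               Y (t, \<omega>) = (\<Sum>i\<le>m. Ys i (restrict (\<lambda>j. Hstop \<Delta> \<tau> \<xi> j (sig_ord \<tau> m i \<omega>) \<omega>) {1..m}, (t, \<omega>))
                   * (if sig_ord \<tau> m i \<omega> \<le> ereal t \<and> ereal t < sig_ord \<tau> m (Suc i) \<omega> then 1 else 0))))"
      by (intro exI[of _ Ys] conjI meas bexI[of _ "N1 \<union> N2"] bexI[of _ B] B NN eqn)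
  qed
qed


end
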